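(* Let $k$ be a finite field and $r\ge2$. (a) The class $\mathfrak{N}_5$ of Lie algebras over $k$ satisfying the axioms $\Phi1$–$\Phi5$ coincides with the class of all $U$-algebras $B$ with $\dim_k B/\mathrm{Fit}(B)\le r$. (b) The class $\mathfrak{N}'_5$ of $F_r$-Lie algebras satisfying $\Phi1$–$\Phi4$ and $\Phi'5$ coincides with the class of all $F_r$-Lie algebras $B$ that are $U$-algebras with $\dim_k B/\mathrm{Fit}(B)=r$.
   Context: Products are left-normed. $\mathrm{Fit}(B)$ is the sum of all nilpotent ideals of $B$. A metabelian Lie algebra $B$ (one satisfying $(x_1x_2)(x_3x_4)=0$) is a $U$-algebra if $\mathrm{Fit}(B)$ is abelian and, with $n=\dim B/\mathrm{Fit}(B)$ finite, $\mathrm{Fit}(B)$ is a torsion-free module over $k[x_1,\dots,x_n]$, where the abelian algebra $B/\mathrm{Fit}(B)$ (with basis $\bar b_1,\dots,\bar b_n$) acts on $\mathrm{Fit}(B)$ by $u\cdot x_i=ub_i$. $F_r$ is the free metabelian Lie algebra of rank $r$ with free base $a_1,\dots,a_r$; an $F_r$-Lie algebra contains a designated copy of $F_r$. For a term $y$ and $f\in k[x_1,\dots,x_n]$, $y\cdot f(t_1,\dots,t_n)$ is the Lie term where monomial $x_{i_1}\cdots x_{i_t}$ acts by $y\mapsto yt_{i_1}\cdots t_{i_t}$, extended linearly. Let $\mathrm{Fit}(x)\equiv\forall y\,(xyx=0)$ and $\varphi(x_1,\dots,x_n)\equiv\bigwedge_{(\alpha_i)\in k^n\setminus\{0\}}\neg\mathrm{Fit}(\sum\alpha_ix_i)$.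 Axioms: $\Phi1$: $\forall x_1..x_4\,(x_1x_2)(x_3x_4)=0$. $\Phi2$: $\forall x,y\,(xyx=0\wedge xyy=0\to xy=0)$. $\Phi3$: $\forall x,y,z\,(x\ne0\wedge xy=0\wedge xz=0\to yz=0)$. $\Phi4$: $\forall x_1..x_{r+1}\,\neg\varphi(x_1..x_{r+1})$. $\Phi5$: for every $n\le r$ and nonzero $f\in k[x_1..x_n]$: $\forall z_1,z_2,x_1..x_n\,((z_1z_2)\cdot f(x_1..x_n)=0\wedge z_1z_2\ne0\to\neg\varphi(x_1..x_n))$. $\Phi'5$: for every nonzero $f\in k[x_1..x_r]$: $\forall z_1,z_2\,((z_1z_2)\cdot f(a_1..a_r)=0\to z_1z_2=0)$. *)

theory Defs
  imports Complex_Main "HOL-Library.Poly_Mapping"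
begin

text \<open>Products are left-normed:
  xyz = (xy)z = br (br x y) z.\<close>

definition lie_algebra :: "('k::field \<Rightarrow> 'b::ab_group_add \<Rightarrow> 'b) \<Rightarrow> ('b \<Rightarrow> 'b \<Rightarrow> 'b) \<Rightarrow> bool" where
  "lie_algebra sc br \<longleftrightarrow> vector_space sc
     \<and> (\<forall>x y z. br (x + y) z = br x z + br y z)
     \<and> (\<forall>x y z. br x (y + z) = br x y + br x z)
     \<and> (\<forall>c x y. br (sc c x) y = sc c (br x y))
     \<and> (\<forall>c x y. br x (sc c y) = sc c (br x y))
     \<and> (\<forall>x. br x x = 0)
     \<and> (\<forall>x y z. br x (br y z) + br y (br z x) + br z (br x y) = 0)"

definition metabelian :: "('b::ab_group_add \<Rightarrow> 'b \<Rightarrow> 'b) \<Rightarrow> bool" where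
  "metabelian br \<longleftrightarrow> (\<forall>x1 x2 x3 x4. br (br x1 x2) (br x3 x4) = 0)"

definition lie_ideal :: "('k::field \<Rightarrow> 'b::ab_group_add \<Rightarrow> 'b) \<Rightarrow> ('b \<Rightarrow> 'b \<Rightarrow> 'b) \<Rightarrow> 'b set \<Rightarrow> bool" where
  "lie_ideal sc br I \<longleftrightarrow> module.subspace sc I \<and> (\<forall>x\<in>I. \<forall>y. br x y \<in> I \<and> br y x \<in> I)"

text \<open>Lower central series of a subalgebra I (viewed as a Lie algebra):
  I^1 = I, I^(m+1) = [I^m, I].  Here lcs .. 0 = I.\<close>
fun lcs :: "('k::field \<Rightarrow> 'b::ab_group_add \<Rightarrow> 'b) \<Rightarrow> ('b \<Rightarrow> 'b \<Rightarrow> 'b) \<Rightarrow> 'b set \<Rightarrow> nat \<Rightarrow> 'b set" where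
  "lcs sc br I 0 = I"
| "lcs sc br I (Suc m) = module.span sc {br x y | x y. x \<in> lcs sc br I m \<and> y \<in> I}"

definition nilpotent_ideal :: "('k::field \<Rightarrow> 'b::ab_group_add \<Rightarrow> 'b) \<Rightarrow> ('b \<Rightarrow> 'b \<Rightarrow> 'b) \<Rightarrow> 'b set \<Rightarrow> bool" where
  "nilpotent_ideal sc br I \<longleftrightarrow> lie_ideal sc br I \<and> (\<exists>m. lcs sc br I m \<subseteq> {0})"

definition Fit :: "('k::field \<Rightarrow> 'b::ab_group_add \<Rightarrow> 'b) \<Rightarrow> ('b \<Rightarrow> 'b \<Rightarrow> 'b) \<Rightarrow> 'b set" where
  "Fit sc br = module.span sc (\<Union>{I. nilpotent_ideal sc br I})"

definition quot_basis :: "('k::field \<Rightarrow> 'b::ab_group_add \<Rightarrow> 'b) \<Rightarrow> 'b set \<Rightarrow> (nat \<Rightarrow> 'b) \<Rightarrow> nat \<Rightarrow> bool" where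
  "quot_basis sc S b n \<longleftrightarrow>
     (\<forall>c. (\<Sum>i<n. sc (c i) (b i)) \<in> S \<longrightarrow> (\<forall>i<n. c i = 0))
     \<and> module.span sc (S \<union> b ` {..<n}) = UNIV"

definition quot_dim :: "('k::field \<Rightarrow> 'b::ab_group_add \<Rightarrow> 'b) \<Rightarrow> 'b set \<Rightarrow> nat \<Rightarrow> bool" where
  "quot_dim sc S n \<longleftrightarrow> (\<exists>b. quot_basis sc S b n)"

text \<open>Multivariate polynomials over 'k: finitely supported maps from monomials
  (finitely supported exponent vectors) to coefficients.  Variable x_(i+1) of the paper is index i.\<close>

definition poly_in_vars :: "nat \<Rightarrow> ((nat \<Rightarrow>\<^sub>0 nat) \<Rightarrow>\<^sub>0 'k::zero) \<Rightarrow> bool" where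
  "poly_in_vars n f \<longleftrightarrow> (\<forall>m\<in>Poly_Mapping.keys f. Poly_Mapping.keys m \<subseteq> {..<n})"

text \<open>y . m(t): the monomial x_i1...x_is acts by y \<mapsto> y t_i1 ... t_is (left-normed),
  the variables taken in increasing order of index.\<close>
definition mon_act :: "('b \<Rightarrow> 'b \<Rightarrow> 'b) \<Rightarrow> 'b \<Rightarrow> (nat \<Rightarrow>\<^sub>0 nat) \<Rightarrow> (nat \<Rightarrow> 'b) \<Rightarrow> 'b" where
  "mon_act br y m t =
     foldl (\<lambda>z i. ((\<lambda>w. br w (t i)) ^^ Poly_Mapping.lookup m i) z) y (sorted_list_of_set (Poly_Mapping.keys m))"

definition poly_act :: "('k::field \<Rightarrow> 'b::ab_group_add \<Rightarrow> 'b) \<Rightarrow> ('b \<Rightarrow> 'b \<Rightarrow> 'b) \<Rightarrow> 'b \<Rightarrow> ((nat \<Rightarrow>\<^sub>0 nat) \<Rightarrow>\<^sub>0 'k) \<Rightarrow> (nat \<Rightarrow> 'b) \<Rightarrow> 'b" where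
  "poly_act sc br y f t = (\<Sum>m\<in>Poly_Mapping.keys f. sc (Poly_Mapping.lookup f m) (mon_act br y m t))"

definition abelian_set :: "('b::ab_group_add \<Rightarrow> 'b \<Rightarrow> 'b) \<Rightarrow> 'b set \<Rightarrow> bool" where
  "abelian_set br S \<longleftrightarrow> (\<forall>x\<in>S. \<forall>y\<in>S. br x y = 0)"

definition U_algebra :: "('k::field \<Rightarrow> 'b::ab_group_add \<Rightarrow> 'b) \<Rightarrow> ('b \<Rightarrow> 'b \<Rightarrow> 'b) \<Rightarrow> bool" where
  "U_algebra sc br \<longleftrightarrow> lie_algebra sc br \<and> metabelian br \<and> abelian_set br (Fit sc br)
     \<and> (\<exists>n b. quot_basis sc (Fit sc br) b n
          \<and> (\<forall>f. f \<noteq> 0 \<and> poly_in_vars n f \<longrightarrow>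
                (\<forall>u\<in>Fit sc br. poly_act sc br u f b = 0 \<longrightarrow> u = 0)))"

definition fitf :: "('b::ab_group_add \<Rightarrow> 'b \<Rightarrow> 'b) \<Rightarrow> 'b \<Rightarrow> bool" where
  "fitf br x \<longleftrightarrow> (\<forall>y. br (br x y) x = 0)"

definition phi :: "('k::field \<Rightarrow> 'b::ab_group_add \<Rightarrow> 'b) \<Rightarrow> ('b \<Rightarrow> 'b \<Rightarrow> 'b) \<Rightarrow> nat \<Rightarrow> (nat \<Rightarrow> 'b) \<Rightarrow> bool" where
  "phi sc br n x \<longleftrightarrow>
     (\<forall>\<alpha>::nat \<Rightarrow> 'k. (\<exists>i<n. \<alpha> i \<noteq> 0) \<longrightarrow> \<not> fitf br (\<Sum>i<n. sc (\<alpha> i) (x i)))"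

definition Phi1 :: "('b::ab_group_add \<Rightarrow> 'b \<Rightarrow> 'b) \<Rightarrow> bool" where
  "Phi1 br \<longleftrightarrow> (\<forall>x1 x2 x3 x4. br (br x1 x2) (br x3 x4) = 0)"

definition Phi2 :: "('b::ab_group_add \<Rightarrow> 'b \<Rightarrow> 'b) \<Rightarrow> bool" where
  "Phi2 br \<longleftrightarrow> (\<forall>x y. br (br x y) x = 0 \<and> br (br x y) y = 0 \<longrightarrow> br x y = 0)"

definition Phi3 :: "('b::ab_group_add \<Rightarrow> 'b \<Rightarrow> 'b) \<Rightarrow> bool" where
  "Phi3 br \<longleftrightarrow> (\<forall>x y z. x \<noteq> 0 \<and> br x y = 0 \<and> br x z = 0 \<longrightarrow> br y z = 0)"

definition Phi4 :: "('k::field \<Rightarrow> 'b::ab_group_add \<Rightarrow> 'b) \<Rightarrow> ('b \<Rightarrow> 'b \<Rightarrow> 'b) \<Rightarrow> nat \<Rightarrow> bool" where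
  "Phi4 sc br r \<longleftrightarrow> (\<forall>x. \<not> phi sc br (Suc r) x)"

definition Phi5 :: "('k::field \<Rightarrow> 'b::ab_group_add \<Rightarrow> 'b) \<Rightarrow> ('b \<Rightarrow> 'b \<Rightarrow> 'b) \<Rightarrow> nat \<Rightarrow> bool" where
  "Phi5 sc br r \<longleftrightarrow> (\<forall>n\<le>r. \<forall>f::(nat \<Rightarrow>\<^sub>0 nat) \<Rightarrow>\<^sub>0 'k. f \<noteq> 0 \<and> poly_in_vars n f \<longrightarrow>
      (\<forall>z1 z2 x. poly_act sc br (br z1 z2) f x = 0 \<and> br z1 z2 \<noteq> 0 \<longrightarrow> \<not> phi sc br n x))"

definition Phi5' :: "('k::field \<Rightarrow> 'b::ab_group_add \<Rightarrow> 'b) \<Rightarrow> ('b \<Rightarrow> 'b \<Rightarrow> 'b) \<Rightarrow> nat \<Rightarrow> (nat \<Rightarrow> 'b) \<Rightarrow> bool" where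
  "Phi5' sc br r a \<longleftrightarrow> (\<forall>f::(nat \<Rightarrow>\<^sub>0 nat) \<Rightarrow>\<^sub>0 'k. f \<noteq> 0 \<and> poly_in_vars r f \<longrightarrow>
      (\<forall>z1 z2. poly_act sc br (br z1 z2) f a = 0 \<longrightarrow> br z1 z2 = 0))"

definition gen_subalg :: "('k::field \<Rightarrow> 'b::ab_group_add \<Rightarrow> 'b) \<Rightarrow> ('b \<Rightarrow> 'b \<Rightarrow> 'b) \<Rightarrow> 'b set \<Rightarrow> 'b set" where
  "gen_subalg sc br A = \<Inter>{S. module.subspace sc S \<and> A \<subseteq> S \<and> (\<forall>x\<in>S. \<forall>y\<in>S. br x y \<in> S)}"

definition lie_hom_on :: "('k::field \<Rightarrow> 'b::ab_group_add \<Rightarrow> 'b) \<Rightarrow> ('b \<Rightarrow> 'b \<Rightarrow> 'b)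
    \<Rightarrow> ('k \<Rightarrow> 'c::ab_group_add \<Rightarrow> 'c) \<Rightarrow> ('c \<Rightarrow> 'c \<Rightarrow> 'c) \<Rightarrow> 'b set \<Rightarrow> ('b \<Rightarrow> 'c) \<Rightarrow> bool" where
  "lie_hom_on sc br sc' br' S h \<longleftrightarrow>
     (\<forall>x\<in>S. \<forall>y\<in>S. h (x + y) = h x + h y \<and> h (br x y) = br' (h x) (h y))
     \<and> (\<forall>c. \<forall>x\<in>S. h (sc c x) = sc' c (h x))"

text \<open>Test algebras for the universal property: metabelian Lie algebra structures on the
  countably-infinite-dimensional space k^(N) (finitely supported sequences) with its standard scalar
  multiplication.\<close>
definition std_scale :: "'k::field \<Rightarrow> (nat \<Rightarrow>\<^sub>0 'k) \<Rightarrow> (nat \<Rightarrow>\<^sub>0 'k)" where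
  "std_scale c v = Poly_Mapping.map (\<lambda>x. c * x) v"

text \<open>a 0, ..., a (r-1) freely generate a free metabelian Lie subalgebra (a copy of F_r).\<close>
definition free_metabelian_on :: "('k::field \<Rightarrow> 'b::ab_group_add \<Rightarrow> 'b) \<Rightarrow> ('b \<Rightarrow> 'b \<Rightarrow> 'b)
    \<Rightarrow> nat \<Rightarrow> (nat \<Rightarrow> 'b) \<Rightarrow> bool" where
  "free_metabelian_on sc br r a \<longleftrightarrow>
     (let S = gen_subalg sc br (a ` {..<r}) in
       (\<forall>x1\<in>S. \<forall>x2\<in>S. \<forall>x3\<in>S. \<forall>x4\<in>S. br (br x1 x2) (br x3 x4) = 0)
       \<and> (\<forall>br' :: (nat \<Rightarrow>\<^sub>0 'k) \<Rightarrow> (nat \<Rightarrow>\<^sub>0 'k) \<Rightarrow> (nat \<Rightarrow>\<^sub>0 'k).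
            lie_algebra std_scale br' \<and> metabelian br' \<longrightarrow>
            (\<forall>c. \<exists>h. lie_hom_on sc br std_scale br' S h \<and> (\<forall>i<r. h (a i) = c i))))"

definition Fr_lie_algebra :: "('k::field \<Rightarrow> 'b::ab_group_add \<Rightarrow> 'b) \<Rightarrow> ('b \<Rightarrow> 'b \<Rightarrow> 'b)
    \<Rightarrow> nat \<Rightarrow> (nat \<Rightarrow> 'b) \<Rightarrow> bool" where
  "Fr_lie_algebra sc br r a \<longleftrightarrow> lie_algebra sc br \<and> free_metabelian_on sc br r a"

end

theory Submission
  imports Defs "HOL-Library.FuncSet"
begin


locale mla =
  fixes sc :: "'k::field \<Rightarrow> 'b::ab_group_add \<Rightarrow> 'b" and br :: "'b \<Rightarrow> 'b \<Rightarrow> 'b"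
  assumes lie: "lie_algebra sc br" and meta: "metabelian br"
begin

sublocale V: vector_space sc using lie unfolding lie_algebra_def by blast

lemma addL: "br (x + y) z = br x z + br y z" using lie unfolding lie_algebra_def by blast
lemma addR: "br x (y + z) = br x y + br x z" using lie unfolding lie_algebra_def by blast
lemma scL: "br (sc c x) y = sc c (br x y)" using lie unfolding lie_algebra_def by blast
lemma scR: "br x (sc c y) = sc c (br x y)" using lie unfolding lie_algebra_def by blast
lemma self: "br x x = 0" using lie unfolding lie_algebra_def by blast
lemma jac: "br x (br y z) + br y (br z x) + br z (br x y) = 0" using lie unfolding lie_algebra_def by blast
lemma met: "br (br x1 x2) (br x3 x4) = 0" using meta unfolding metabelian_def by blast

lemma zeroL[simp]: "br 0 y = 0" using addL[of 0 0 y] by simp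
lemma zeroR[simp]: "br y 0 = 0" using addR[of y 0 0] by simp
lemma negL: "br (- x) y = - br x y" using addL[of x "-x" y] by (simp add: add_eq_0_iff2)
lemma negR: "br y (- x) = - br y x" using addR[of y x "-x"] by (simp add: add_eq_0_iff2)
lemma diffL: "br (x - y) z = br x z - br y z" using addL[of x "-y" z] negL by simp
lemma diffR: "br z (x - y) = br z x - br z y" using addR[of z x "-y"] negR by simp
lemma anti: "br x y = - br y x"
proof -
  have "0 = br (x+y) (x+y)" by (simp only: self)
  also have "\<dots> = br x (x+y) + br y (x+y)" by (rule addL)
  also have "\<dots> = br x y + br y x" by (simp add: addR self)
  finally have "br x y + br y x = 0" by simp
  then show ?thesis by (simp add: eq_neg_iff_add_eq_0)
qed
lemma sumL: "br (\<Sum>i\<in>A. f i) y = (\<Sum>i\<in>A. br (f i) y)"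
  by (induction A rule: infinite_finite_induct) (auto simp: addL)
lemma sumR: "br y (\<Sum>i\<in>A. f i) = (\<Sum>i\<in>A. br y (f i))"
  by (induction A rule: infinite_finite_induct) (auto simp: addR)

definition Cp where "Cp = {x. \<forall>y z. br (br y z) x = 0}"

lemma Cp_sub: "V.subspace Cp"
  unfolding V.subspace_def Cp_def by (auto simp: addR scR)

lemma prod_Cp: "br y z \<in> Cp" unfolding Cp_def by (auto simp: met)

lemma Cp_ideal: "x \<in> Cp \<Longrightarrow> br x y \<in> Cp \<and> br y x \<in> Cp" using prod_Cp by auto

lemma commute_Cp:
  assumes "br w (br s t) = 0"
  shows "br (br w s) t = br (br w t) s"
proof -
  have "br w (br s t) + br s (br t w) + br t (br w s) = 0" by (rule jac)
  moreover have "br s (br t w) = br (br w t) s" using anti[of s "br t w"] anti[of t w] negL by simp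
  moreover have "br t (br w s) = - br (br w s) t" using anti by blast
  ultimately show ?thesis using assms by (simp add: algebra_simps)
qed

lemma lie_ideal_Cp: "lie_ideal sc br Cp"
  unfolding lie_ideal_def using Cp_sub Cp_ideal by blast

lemma lcs_Cp2: "lcs sc br Cp 2 \<subseteq> {0}"
proof -
  have "lcs sc br Cp 1 \<subseteq> {x. \<forall>y\<in>Cp. br x y = 0}"
  proof -
    have "V.subspace {x. \<forall>y\<in>Cp. br x y = 0}"
      unfolding V.subspace_def by (auto simp: addL scL)
    moreover have "{br x y | x y. x \<in> Cp \<and> y \<in> Cp} \<subseteq> {x. \<forall>y\<in>Cp. br x y = 0}"
      unfolding Cp_def by auto
    ultimately show ?thesis by (simp add: V.span_minimal numeral_eq_Suc)
  qed
  then have "{br x y | x y. x \<in> lcs sc br Cp 1 \<and> y \<in> Cp} \<subseteq> {0}" by auto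
  then show ?thesis by (simp add: numeral_eq_Suc V.span_minimal)
qed

lemma Cp_Fit: "Cp \<subseteq> Fit sc br"
proof -
  have "nilpotent_ideal sc br Cp" unfolding nilpotent_ideal_def using lie_ideal_Cp lcs_Cp2 by blast
  then have "Cp \<subseteq> \<Union>{I. nilpotent_ideal sc br I}" by blast
  then show ?thesis unfolding Fit_def using V.span_superset by blast
qed

lemma fitf_Cp: "x \<in> Cp \<Longrightarrow> fitf br x" unfolding fitf_def Cp_def by auto

lemma fitf_imp_Cp:
  assumes P2: "Phi2 br" and f: "fitf br x" shows "x \<in> Cp"
  unfolding Cp_def mem_Collect_eq
proof (intro allI)
  fix y z
  let ?u = "br y z"
  have 1: "br (br ?u x) ?u = 0" by (rule met)
  have "br (br ?u x) x = br (- br x ?u) x" using anti by metis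
  also have "\<dots> = - br (br x ?u) x" by (rule negL)
  also have "\<dots> = 0" using f unfolding fitf_def by simp
  finally show "br ?u x = 0" using P2 1 unfolding Phi2_def by blast
qed

lemma lcs_sub: "lie_ideal sc br I \<Longrightarrow> lcs sc br I j \<subseteq> I"
proof (induction j)
  case 0 then show ?case by simp
next
  case (Suc j)
  have "{br x y | x y. x \<in> lcs sc br I j \<and> y \<in> I} \<subseteq> I" using Suc unfolding lie_ideal_def by blast
  then show ?case using Suc(2) unfolding lie_ideal_def by (simp add: V.span_minimal)
qed

lemma lcs_down:
  assumes P2: "Phi2 br" and I: "lie_ideal sc br I" and z: "lcs sc br I (Suc (Suc j)) \<subseteq> {0}"
  shows "lcs sc br I (Suc j) \<subseteq> {0}"
proof -
  have "{br x y | x y. x \<in> lcs sc br I j \<and> y \<in> I} \<subseteq> {0}"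
  proof clarify
    fix x y assume x: "x \<in> lcs sc br I j" and y: "y \<in> I"
    have xy: "br x y \<in> lcs sc br I (Suc j)" using x y by (auto intro: V.span_base)
    have "x \<in> I" using x lcs_sub[OF I] by blast
    then have "br (br x y) x \<in> lcs sc br I (Suc (Suc j))" using xy by (auto intro: V.span_base)
    then have 1: "br (br x y) x = 0" using z by blast
    have "br (br x y) y \<in> lcs sc br I (Suc (Suc j))" using xy y by (auto intro: V.span_base)
    then have 2: "br (br x y) y = 0" using z by blast
    show "br x y = 0" using P2 1 2 unfolding Phi2_def by blast
  qed
  then show ?thesis by (simp add: V.span_minimal)
qed

lemma nil_abelian:
  assumes P2: "Phi2 br" and I: "nilpotent_ideal sc br I"
  shows "lcs sc br I 1 \<subseteq> {0}"
proof -
  have Ii: "lie_ideal sc br I" using I unfolding nilpotent_ideal_def by blast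
  obtain m where m: "lcs sc br I m \<subseteq> {0}" using I unfolding nilpotent_ideal_def by blast
  have "lcs sc br I m \<subseteq> {0} \<longrightarrow> lcs sc br I 1 \<subseteq> {0}"
  proof (induction m rule: less_induct)
    case (less m)
    show ?case
    proof (cases m)
      case 0
      then show ?thesis
      proof (intro impI)
        assume "lcs sc br I m \<subseteq> {0}"
        then have "I \<subseteq> {0}" using 0 by simp
        then have "{br x y | x y. x \<in> lcs sc br I 0 \<and> y \<in> I} \<subseteq> {0}" by auto
        then show "lcs sc br I 1 \<subseteq> {0}" by (simp add: V.span_minimal)
      qed
    next
      case (Suc j)
      show ?thesis
      proof (cases j)
        case 0 then show ?thesis using Suc by simp
      next
        case (Suc i)
        show ?thesis
        proof
          assume h: "lcs sc br I m \<subseteq> {0}"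
          have "lcs sc br I (Suc i) \<subseteq> {0}"
            using lcs_down[OF P2 Ii, of i] h \<open>m = Suc j\<close> Suc by simp
          moreover have "Suc i < m" using \<open>m = Suc j\<close> Suc by simp
          ultimately show "lcs sc br I 1 \<subseteq> {0}" using less.IH by blast
        qed
      qed
    qed
  qed
  then show ?thesis using m by blast
qed

lemma nil_Cp:
  assumes P2: "Phi2 br" and I: "nilpotent_ideal sc br I"
  shows "I \<subseteq> Cp"
proof
  fix x assume x: "x \<in> I"
  have Ii: "lie_ideal sc br I" using I unfolding nilpotent_ideal_def by blast
  have "fitf br x" unfolding fitf_def
  proof
    fix y
    have "br x y \<in> I" using x Ii unfolding lie_ideal_def by blast
    then have "br (br x y) x \<in> lcs sc br I 1" using x by (auto intro: V.span_base)
    then show "br (br x y) x = 0" using nil_abelian[OF P2 I] by blast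
  qed
  then show "x \<in> Cp" using fitf_imp_Cp[OF P2] by blast
qed

lemma Fit_eq_Phi2: assumes P2: "Phi2 br" shows "Fit sc br = Cp"
proof
  show "Fit sc br \<subseteq> Cp" unfolding Fit_def using nil_Cp[OF P2] Cp_sub
    by (intro V.span_minimal) auto
qed (rule Cp_Fit)

lemma Cp_abelian_Phi2: assumes P2: "Phi2 br" shows "abelian_set br Cp"
  unfolding abelian_set_def
proof (intro ballI)
  fix x w assume x: "x \<in> Cp" and w: "w \<in> Cp"
  have "br (br x w) x = 0" using x unfolding Cp_def by blast
  moreover have "br (br x w) w = 0" using w unfolding Cp_def by blast
  ultimately show "br x w = 0" using P2 unfolding Phi2_def by blast
qed

lemma Fit_eq_U: assumes ab: "abelian_set br (Fit sc br)" shows "Fit sc br = Cp"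
proof
  show "Fit sc br \<subseteq> Cp" unfolding Cp_def
    using ab Cp_Fit prod_Cp unfolding abelian_set_def by blast
qed (rule Cp_Fit)

end


definition PP :: "('b \<Rightarrow> 'b \<Rightarrow> 'b) \<Rightarrow> nat list \<Rightarrow> (nat \<Rightarrow> nat) \<Rightarrow> (nat \<Rightarrow> 'b) \<Rightarrow> 'b \<Rightarrow> 'b" where
  "PP br xs e t w = foldl (\<lambda>z i. ((\<lambda>w. br w (t i)) ^^ e i) z) w xs"

lemma PP_Nil[simp]: "PP br [] e t w = w" by (simp add: PP_def)
lemma PP_Cons[simp]: "PP br (a # xs) e t w = PP br xs e t (((\<lambda>w. br w (t a)) ^^ e a) w)"
  by (simp add: PP_def)

lemma PP_cong: "(\<And>i. i \<in> set xs \<Longrightarrow> e i = e' i \<and> t i = t' i) \<Longrightarrow> PP br xs e t w = PP br xs e' t' w"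
  by (induction xs arbitrary: w) auto

lemma mon_act_PP: "mon_act br y m t = PP br (sorted_list_of_set (Poly_Mapping.keys m)) (Poly_Mapping.lookup m) t y"
  by (simp add: mon_act_def PP_def)

locale mlaC = mla +
  assumes ab: "abelian_set br Cp"
begin

lemma comm: assumes "w \<in> Cp" shows "br (br w s) t = br (br w t) s"
  using assms ab prod_Cp commute_Cp unfolding abelian_set_def by blast

lemma pow_Cp: "w \<in> Cp \<Longrightarrow> ((\<lambda>w. br w s) ^^ k) w \<in> Cp"
  by (induction k) (auto simp: Cp_ideal)

lemma pow_comm: "w \<in> Cp \<Longrightarrow> ((\<lambda>w. br w s) ^^ k) (br w s') = br (((\<lambda>w. br w s) ^^ k) w) s'"
proof (induction k)
  case 0 then show ?case by simp
next
  case (Suc k)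
  have "((\<lambda>w. br w s) ^^ k) w \<in> Cp" using pow_Cp Suc(2) by blast
  then show ?case using comm Suc by simp
qed

lemma PP_Cp: "w \<in> Cp \<Longrightarrow> PP br xs e t w \<in> Cp"
  by (induction xs arbitrary: w) (auto simp: pow_Cp)

lemma PP_comm: "w \<in> Cp \<Longrightarrow> PP br xs e t (br w s) = br (PP br xs e t w) s"
  by (induction xs arbitrary: w) (auto simp: pow_comm pow_Cp Cp_ideal)

lemma PP_pow_comm: "w \<in> Cp \<Longrightarrow> PP br xs e t (((\<lambda>w. br w s) ^^ k) w) = ((\<lambda>w. br w s) ^^ k) (PP br xs e t w)"
  by (induction k) (auto simp: PP_comm pow_Cp)

lemma PP_inc:
  assumes "distinct xs" "i \<in> set xs" "w \<in> Cp"
  shows "PP br xs (e(i := Suc (e i))) t w = br (PP br xs e t w) (t i)"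
  using assms
proof (induction xs arbitrary: w)
  case Nil then show ?case by simp
next
  case (Cons a xs)
  show ?case
  proof (cases "a = i")
    case True
    have ni: "i \<notin> set xs" using Cons True by simp
    have "PP br (a # xs) (e(i := Suc (e i))) t w = PP br (i # xs) (e(i := Suc (e i))) t w"
      using True by simp
    also have "\<dots> = PP br xs (e(i := Suc (e i))) t (((\<lambda>w. br w (t i)) ^^ Suc (e i)) w)"
      by (simp only: PP_Cons fun_upd_same)
    also have "\<dots> = PP br xs (e(i := Suc (e i))) t (br (((\<lambda>w. br w (t i)) ^^ e i) w) (t i))"
      by simp
    also have "\<dots> = PP br xs e t (br (((\<lambda>w. br w (t i)) ^^ e i) w) (t i))"
      by (rule PP_cong) (use ni in auto)
    also have "\<dots> = br (PP br xs e t (((\<lambda>w. br w (t i)) ^^ e i) w)) (t i)"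
      by (rule PP_comm) (rule pow_Cp[OF Cons(4)])
    also have "\<dots> = br (PP br (a # xs) e t w) (t i)" using True by simp
    finally show ?thesis .
  next
    case False
    then show ?thesis using Cons by (simp add: pow_Cp)
  qed
qed

lemma PP_ins:
  assumes "i \<notin> set xs" "w \<in> Cp"
  shows "PP br (insort i xs) e t w = ((\<lambda>w. br w (t i)) ^^ e i) (PP br xs e t w)"
  using assms
proof (induction xs arbitrary: w)
  case Nil then show ?case by simp
next
  case (Cons a xs)
  show ?case
  proof (cases "i \<le> a")
    case True
    have "PP br (insort i (a # xs)) e t w = PP br (a # xs) e t (((\<lambda>w. br w (t i)) ^^ e i) w)"
      using True by simp
    also have "\<dots> = ((\<lambda>w. br w (t i)) ^^ e i) (PP br (a # xs) e t w)"
      by (rule PP_pow_comm) (rule Cons(3))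
    finally show ?thesis .
  next
    case False
    have "PP br (insort i (a # xs)) e t w = PP br (insort i xs) e t (((\<lambda>w. br w (t a)) ^^ e a) w)"
      using False by simp
    also have "\<dots> = ((\<lambda>w. br w (t i)) ^^ e i) (PP br xs e t (((\<lambda>w. br w (t a)) ^^ e a) w))"
      using Cons by (simp add: pow_Cp)
    finally show ?thesis by simp
  qed
qed

lemma lookup_add_single: "Poly_Mapping.lookup (m + Poly_Mapping.single i 1) = (Poly_Mapping.lookup m)(i := Suc (Poly_Mapping.lookup m i))"
  by (auto simp: lookup_add lookup_single fun_eq_iff)

lemma ma_step:
  assumes y: "y \<in> Cp"
  shows "mon_act br y (m + Poly_Mapping.single i 1) t = br (mon_act br y m t) (t i)"
proof (cases "i \<in> Poly_Mapping.keys m")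
  case True
  have "Poly_Mapping.keys (m + Poly_Mapping.single i 1) = Poly_Mapping.keys m"
    using True by (auto simp: in_keys_iff lookup_add lookup_single when_def split: if_splits)
  then show ?thesis unfolding mon_act_PP lookup_add_single using True y
    by (simp add: PP_inc)
next
  case False
  have k: "Poly_Mapping.keys (m + Poly_Mapping.single i 1) = insert i (Poly_Mapping.keys m)"
    using False by (auto simp: in_keys_iff lookup_add lookup_single when_def split: if_splits)
  have "mon_act br y (m + Poly_Mapping.single i 1) t =
    PP br (insort i (sorted_list_of_set (Poly_Mapping.keys m))) ((Poly_Mapping.lookup m)(i := Suc (Poly_Mapping.lookup m i))) t y"
    unfolding mon_act_PP lookup_add_single k using False by (simp add: sorted_list_of_set_insert)
  also have "\<dots> = br (PP br (sorted_list_of_set (Poly_Mapping.keys m)) ((Poly_Mapping.lookup m)(i := Suc (Poly_Mapping.lookup m i))) t y) (t i)"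
    using False y by (simp add: PP_ins in_keys_iff)
  also have "\<dots> = br (mon_act br y m t) (t i)"
    unfolding mon_act_PP using False by (subst PP_cong[where e'="Poly_Mapping.lookup m" and t'=t]) auto
  finally show ?thesis .
qed

lemma ma_Cp: "y \<in> Cp \<Longrightarrow> mon_act br y m t \<in> Cp"
  unfolding mon_act_PP by (rule PP_Cp)

lemma ma_comm: "y \<in> Cp \<Longrightarrow> mon_act br (br y s) m t = br (mon_act br y m t) s"
  unfolding mon_act_PP by (rule PP_comm)

end

lemma ma_zero[simp]: "mon_act br y 0 t = y" by (simp add: mon_act_def)

lemma ma_single: "mon_act br y (Poly_Mapping.single i 1) t = br y (t i)"
  by (simp add: mon_act_def)

lemma ma_cong: "(\<And>i. i \<in> Poly_Mapping.keys m \<Longrightarrow> t i = t' i) \<Longrightarrow> mon_act br y m t = mon_act br y m t'"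
  unfolding mon_act_PP by (rule PP_cong) auto


context mla begin

definition indepF :: "nat \<Rightarrow> (nat \<Rightarrow> 'b) \<Rightarrow> bool" where
  "indepF n y \<longleftrightarrow> (\<forall>c. (\<Sum>i<n. sc (c i) (y i)) \<in> Cp \<longrightarrow> (\<forall>i<n. c i = 0))"

lemma Cp0: "0 \<in> Cp" using Cp_sub V.subspace_0 by blast
lemma Cp_add: "x \<in> Cp \<Longrightarrow> y \<in> Cp \<Longrightarrow> x + y \<in> Cp" using Cp_sub V.subspace_add by blast
lemma Cp_sc: "x \<in> Cp \<Longrightarrow> sc c x \<in> Cp" using Cp_sub V.subspace_scale by blast
lemma Cp_diff: "x \<in> Cp \<Longrightarrow> y \<in> Cp \<Longrightarrow> x - y \<in> Cp" using Cp_sub V.subspace_diff by blast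
lemma Cp_sum: "(\<And>i. i \<in> A \<Longrightarrow> f i \<in> Cp) \<Longrightarrow> sum f A \<in> Cp" using Cp_sub V.subspace_sum by blast

lemma span_repr:
  fixes n :: nat
  assumes "v \<in> V.span (Cp \<union> y ` {..<n})"
  shows "\<exists>c f. f \<in> Cp \<and> v = (\<Sum>i<n. sc (c i) (y i)) + f"
proof -
  let ?S = "{v. \<exists>c f. f \<in> Cp \<and> v = (\<Sum>i<n. sc (c i) (y i)) + f}"
  have "V.subspace ?S"
    unfolding V.subspace_def
  proof (intro conjI allI ballI)
    show "0 \<in> ?S" by (rule CollectI, rule exI[of _ "\<lambda>_. 0"], rule exI[of _ 0]) (simp add: Cp0)
  next
    fix x z assume "x \<in> ?S" "z \<in> ?S"
    then obtain c f c' f' where "f \<in> Cp" "x = (\<Sum>i<n. sc (c i) (y i)) + f" "f' \<in> Cp" "z = (\<Sum>i<n. sc (c' i) (y i)) + f'"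
      by blast
    then show "x + z \<in> ?S"
      by (intro CollectI exI[of _ "\<lambda>i. c i + c' i"] exI[of _ "f + f'"])
         (simp add: Cp_add V.scale_left_distrib sum.distrib algebra_simps)
  next
    fix a x assume "x \<in> ?S"
    then obtain c f where "f \<in> Cp" "x = (\<Sum>i<n. sc (c i) (y i)) + f" by blast
    then show "sc a x \<in> ?S"
      by (intro CollectI exI[of _ "\<lambda>i. a * c i"] exI[of _ "sc a f"])
         (simp add: Cp_sc V.scale_right_distrib V.scale_sum_right)
  qed
  moreover have "Cp \<union> y ` {..<n} \<subseteq> ?S"
  proof
    fix v assume "v \<in> Cp \<union> y ` {..<n}"
    then show "v \<in> ?S"
    proof
      assume "v \<in> Cp" then show ?thesis
        by (intro CollectI exI[of _ "\<lambda>_. 0"] exI[of _ v]) simp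
    next
      assume "v \<in> y ` {..<n}"
      then obtain j where j: "j < n" "v = y j" by blast
      have "(\<Sum>i<n. sc (if i = j then 1 else 0) (y i)) = y j"
      proof -
        have "(\<Sum>i<n. sc (if i = j then 1 else 0) (y i)) = (\<Sum>i<n. if i = j then y j else 0)"
          by (rule sum.cong) auto
        moreover have "(\<Sum>i<n. if i = j then y j else 0) = y j"
          using j by (subst sum.delta) auto
        ultimately show ?thesis by simp
      qed
      then show ?thesis using j Cp0
        by (intro CollectI exI[of _ "\<lambda>i. if i = j then 1 else 0"] exI[of _ 0]) simp
    qed
  qed
  ultimately show ?thesis using assms V.span_minimal by blast
qed

lemma repr_span: fixes n :: nat shows "f \<in> Cp \<Longrightarrow> (\<Sum>i<n. sc (c i) (y i)) + f \<in> V.span (Cp \<union> y ` {..<n})"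
  by (intro V.span_add V.span_sum V.span_scale V.span_base) auto

end

locale mlaF = mla sc br for sc :: "'k::{field,finite} \<Rightarrow> 'b::ab_group_add \<Rightarrow> 'b" and br
begin

lemma card_k2: "2 \<le> card (UNIV::'k set)"
proof -
  have "card {0::'k, 1} = 2" by simp
  moreover have "card {0::'k, 1} \<le> card (UNIV::'k set)" by (rule card_mono) auto
  ultimately show ?thesis by simp
qed

lemma card_Pi: "card (PiE {..<p} (\<lambda>_. (UNIV :: 'k set))) = card (UNIV::'k set) ^ p"
  by (simp add: card_PiE)

lemma dep:
  fixes n p :: nat
  assumes np: "n < p" and y: "\<forall>i<p. y i \<in> V.span (Cp \<union> b ` {..<n})"
  shows "\<exists>c. (\<exists>i<p. c i \<noteq> 0) \<and> (\<Sum>i<p. sc (c i) (y i)) \<in> Cp"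
proof -
  have "\<forall>i\<in>{..<p}. \<exists>cf. snd cf \<in> Cp \<and> y i = (\<Sum>j<n. sc (fst cf j) (b j)) + snd cf"
    using y span_repr by fastforce
  then obtain g where g: "\<forall>i\<in>{..<p}. snd (g i) \<in> Cp \<and> y i = (\<Sum>j<n. sc (fst (g i) j) (b j)) + snd (g i)"
    by (metis bchoice)
  define M where "M i = fst (g i)" for i
  define Fv where "Fv i = snd (g i)" for i
  have g': "\<And>i. i < p \<Longrightarrow> Fv i \<in> Cp \<and> y i = (\<Sum>j<n. sc (M i j) (b j)) + Fv i"
    using g unfolding M_def Fv_def by auto
  define L where "L c = restrict (\<lambda>j. \<Sum>i<p. c i * M i j) {..<n}" for c :: "nat \<Rightarrow> 'k"
  define D where "D = PiE {..<p} (\<lambda>_. (UNIV :: 'k set))"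
  have "L ` D \<subseteq> PiE {..<n} (\<lambda>_. (UNIV :: 'k set))" unfolding L_def by (auto simp: PiE_def)
  then have "card (L ` D) \<le> card (UNIV::'k set) ^ n"
  proof -
    have "card (L ` D) \<le> card (PiE {..<n} (\<lambda>_. (UNIV :: 'k set)))"
      by (rule card_mono) (auto intro: finite_PiE simp: \<open>L ` D \<subseteq> _\<close>)
    then show ?thesis using card_Pi[of n] by simp
  qed
  also have "\<dots> < card (UNIV::'k set) ^ p" using card_k2 np by (intro power_strict_increasing) auto
  also have "\<dots> = card D" unfolding D_def by (rule card_Pi[symmetric])
  finally have "\<not> inj_on L D" by (rule pigeonhole)
  then obtain c c' where cc: "c \<in> D" "c' \<in> D" "c \<noteq> c'" "L c = L c'"
    unfolding inj_on_def by blast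
  define d where "d i = c i - c' i" for i
  obtain i0 where "c i0 \<noteq> c' i0" using cc(3) by blast
  then have i0: "i0 < p" using cc(1,2) unfolding D_def by (metis PiE_arb lessThan_iff)
  have dnz: "d i0 \<noteq> 0" unfolding d_def using \<open>c i0 \<noteq> c' i0\<close> by simp
  have dM: "(\<Sum>i<p. d i * M i j) = 0" if "j < n" for j
  proof -
    have "(\<Sum>i<p. c i * M i j) = (\<Sum>i<p. c' i * M i j)"
      using fun_cong[OF cc(4), of j] that unfolding L_def by simp
    then show ?thesis unfolding d_def by (simp add: left_diff_distrib sum_subtractf)
  qed
  have "(\<Sum>i<p. sc (d i) (y i)) = (\<Sum>i<p. sc (d i) (\<Sum>j<n. sc (M i j) (b j))) + (\<Sum>i<p. sc (d i) (Fv i))"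
    using g' by (simp add: V.scale_right_distrib sum.distrib)
  also have "(\<Sum>i<p. sc (d i) (\<Sum>j<n. sc (M i j) (b j))) = (\<Sum>j<n. sc (\<Sum>i<p. d i * M i j) (b j))"
    by (simp add: V.scale_sum_right V.scale_sum_left sum.swap[of _ "{..<p}"])
  also have "\<dots> = 0" using dM by simp
  finally have e: "(\<Sum>i<p. sc (d i) (y i)) = (\<Sum>i<p. sc (d i) (Fv i))" by simp
  have "(\<Sum>i<p. sc (d i) (Fv i)) \<in> Cp" by (intro Cp_sum Cp_sc) (simp add: g')
  then have "(\<Sum>i<p. sc (d i) (y i)) \<in> Cp" using e by simp
  then show ?thesis using dnz i0 by blast
qed

end


lemma pa_superset:
  assumes "finite I" "Poly_Mapping.keys f \<subseteq> I" "vector_space sc"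
  shows "poly_act sc br u f t = (\<Sum>m\<in>I. sc (Poly_Mapping.lookup f m) (mon_act br u m t))"
proof -
  interpret V: vector_space sc by fact
  show ?thesis unfolding poly_act_def
    by (rule sum.mono_neutral_left) (use assms in \<open>auto simp: in_keys_iff\<close>)
qed

context mla begin

lemma indepF_cong: "(\<And>i. i < p \<Longrightarrow> y i = y' i) \<Longrightarrow> indepF p y = indepF p y'"
proof -
  assume h: "\<And>i. i < p \<Longrightarrow> y i = y' i"
  have "(\<Sum>i<p. sc (c i) (y i)) = (\<Sum>i<p. sc (c i) (y' i))" for c
    by (rule sum.cong) (auto simp: h)
  then show ?thesis unfolding indepF_def by simp
qed

lemma indepF_mono: assumes "indepF p y" "q \<le> p" shows "indepF q y"
  unfolding indepF_def
proof (rule allI, rule impI)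
  fix c assume h: "(\<Sum>i<q. sc (c i) (y i)) \<in> Cp"
  define c' where "c' i = (if i < q then c i else 0)" for i
  have "(\<Sum>i<p. sc (c' i) (y i)) = (\<Sum>i<q. sc (c' i) (y i))"
    by (rule sum.mono_neutral_right) (use assms(2) in \<open>auto simp: c'_def\<close>)
  also have "\<dots> = (\<Sum>i<q. sc (c i) (y i))" by (rule sum.cong) (auto simp: c'_def)
  finally have "\<forall>i<p. c' i = 0" using assms(1) h unfolding indepF_def by metis
  then show "\<forall>i<q. c i = 0" using assms(2) unfolding c'_def by (metis less_le_trans)
qed

lemma not_indep_ext:
  assumes ind: "indepF p y" and ni: "\<not> indepF (Suc p) (y(p := v))"
  shows "v \<in> V.span (Cp \<union> y ` {..<p})"
proof -
  obtain c where c: "(\<Sum>i<Suc p. sc (c i) ((y(p := v)) i)) \<in> Cp" "\<exists>i<Suc p. c i \<noteq> 0"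
    using ni unfolding indepF_def by blast
  have s: "(\<Sum>i<Suc p. sc (c i) ((y(p := v)) i)) = (\<Sum>i<p. sc (c i) (y i)) + sc (c p) v"
  proof -
    have "(\<Sum>i<p. sc (c i) ((y(p := v)) i)) = (\<Sum>i<p. sc (c i) (y i))"
      by (rule sum.cong) auto
    then show ?thesis by simp
  qed
  have cp: "c p \<noteq> 0"
  proof
    assume "c p = 0"
    then have "(\<Sum>i<p. sc (c i) (y i)) \<in> Cp" using c s by simp
    then have "\<forall>i<p. c i = 0" using ind unfolding indepF_def by blast
    then show False using c(2) \<open>c p = 0\<close> by (metis less_Suc_eq)
  qed
  have "sc (c p) v = (\<Sum>i<Suc p. sc (c i) ((y(p := v)) i)) - (\<Sum>i<p. sc (c i) (y i))"
    unfolding s by (rule add_diff_cancel_left'[symmetric])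
  also have "\<dots> \<in> V.span (Cp \<union> y ` {..<p})"
    using c(1) by (intro V.span_diff V.span_sum V.span_scale V.span_base) auto
  finally have "sc (inverse (c p)) (sc (c p) v) \<in> V.span (Cp \<union> y ` {..<p})"
    by (rule V.span_scale)
  moreover have "sc (inverse (c p)) (sc (c p) v) = v" using cp by simp
  ultimately show ?thesis by simp
qed

lemma central_span:
  assumes "\<And>y. y \<in> S \<Longrightarrow> br u y = 0" "V.span S = UNIV"
  shows "br u y = 0"
proof -
  have "V.subspace {y. br u y = 0}" unfolding V.subspace_def by (auto simp: addR scR)
  then have "V.span S \<subseteq> {y. br u y = 0}" using assms(1) by (intro V.span_minimal) auto
  then show ?thesis using assms(2) by auto
qed

lemma indepF_notin: assumes "indepF n b" "j < n" shows "b j \<notin> Cp"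
proof
  assume "b j \<in> Cp"
  have "(\<Sum>i<n. sc (if i = j then 1 else 0) (b i)) = (\<Sum>i<n. if i = j then b j else 0)"
    by (rule sum.cong) auto
  also have "\<dots> = b j" using assms(2) by (subst sum.delta) auto
  finally have "(\<Sum>i<n. sc (if i = j then 1 else 0) (b i)) \<in> Cp" using \<open>b j \<in> Cp\<close> by simp
  from assms(1)[unfolded indepF_def, rule_format, of "\<lambda>i. if i = j then 1 else 0", OF this assms(2)]
  show False by simp
qed

end

context mlaC begin

lemma pa_comm: "u \<in> Cp \<Longrightarrow> poly_act sc br (br u s) f t = br (poly_act sc br u f t) s"
  unfolding poly_act_def by (simp add: sumL scL ma_comm)

lemma pa_const:
  assumes "poly_in_vars 0 f" "f \<noteq> 0"
  shows "\<exists>c. c \<noteq> 0 \<and> poly_act sc br u f t = sc c u"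
proof -
  have "Poly_Mapping.keys f \<subseteq> {0}" using assms(1) unfolding poly_in_vars_def by auto
  moreover have "Poly_Mapping.keys f \<noteq> {}" using assms(2) by simp
  ultimately have k: "Poly_Mapping.keys f = {0}" by blast
  then show ?thesis unfolding poly_act_def by (auto simp: in_keys_iff)
qed

lemma tf_core:
  assumes P3: "Phi3 br" and sp: "V.span (Cp \<union> b ` {..<n}) = UNIV" and ind: "indepF n b"
    and u: "u \<in> Cp" and pa: "poly_act sc br u f b = 0" and f: "f \<noteq> 0" "poly_in_vars n f"
    and H: "\<And>i. i < n \<Longrightarrow> poly_act sc br (br u (b i)) f b = 0 \<Longrightarrow> br u (b i) = 0"
  shows "u = 0"
proof (cases "n = 0")
  case True
  then obtain c where "c \<noteq> 0" "poly_act sc br u f b = sc c u" using pa_const f by blast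
  then show ?thesis using pa by simp
next
  case False
  have bi: "br u (b i) = 0" if "i < n" for i
    using H[OF that] pa_comm[OF u] pa by simp
  have cen: "br u y = 0" for y
    by (rule central_span[OF _ sp]) (use bi u ab in \<open>auto simp: abelian_set_def\<close>)
  show ?thesis
  proof (rule ccontr)
    assume "u \<noteq> 0"
    then have "br y z = 0" for y z using P3 cen unfolding Phi3_def by blast
    then have "b 0 \<in> Cp" unfolding Cp_def by simp
    then show False using indepF_notin[OF ind] False by blast
  qed
qed

end


definition tdeg :: "(nat \<Rightarrow>\<^sub>0 nat) \<Rightarrow> nat" where
  "tdeg a = sum (Poly_Mapping.lookup a) (Poly_Mapping.keys a)"

definition Mon :: "nat \<Rightarrow> nat \<Rightarrow> (nat \<Rightarrow>\<^sub>0 nat) set" where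
  "Mon n d = {a. Poly_Mapping.keys a \<subseteq> {..<n} \<and> tdeg a \<le> d}"

lemma tdeg_eq: "finite K \<Longrightarrow> Poly_Mapping.keys a \<subseteq> K \<Longrightarrow> tdeg a = sum (Poly_Mapping.lookup a) K"
  unfolding tdeg_def by (rule sum.mono_neutral_left) (auto simp: in_keys_iff)

lemma keys_add_single: fixes a :: "nat \<Rightarrow>\<^sub>0 nat" shows "Poly_Mapping.keys (a + Poly_Mapping.single i 1) = insert i (Poly_Mapping.keys a)"
  apply (rule set_eqI)
  unfolding in_keys_iff lookup_add lookup_single by (auto simp: when_def in_keys_iff)

lemma tdeg_add_single: "tdeg (a + Poly_Mapping.single i (1::nat)) = Suc (tdeg a)"
proof -
  let ?K = "insert i (Poly_Mapping.keys a)"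
  have "tdeg (a + Poly_Mapping.single i 1) = sum (Poly_Mapping.lookup (a + Poly_Mapping.single i 1)) ?K"
    by (rule tdeg_eq) (use keys_add_single[of a i] in auto)
  also have "\<dots> = sum (Poly_Mapping.lookup a) ?K + sum (\<lambda>j. Poly_Mapping.lookup (Poly_Mapping.single i (1::nat)) j) ?K"
    by (simp add: lookup_add sum.distrib)
  also have "sum (\<lambda>j. Poly_Mapping.lookup (Poly_Mapping.single i (1::nat)) j) ?K = 1"
    by (simp add: lookup_single when_def)
  also have "sum (Poly_Mapping.lookup a) ?K = tdeg a"
    by (rule tdeg_eq[symmetric]) auto
  finally show ?thesis by simp
qed

lemma lookup_le_tdeg: "Poly_Mapping.lookup a i \<le> tdeg a"
proof (cases "i \<in> Poly_Mapping.keys a")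
  case True
  then show ?thesis unfolding tdeg_def by (intro member_le_sum) auto
next
  case False then show ?thesis by (simp add: in_keys_iff)
qed

lemma tdeg_Suc:
  assumes "tdeg a = Suc k"
  shows "\<exists>b i. a = b + Poly_Mapping.single i 1 \<and> i \<in> Poly_Mapping.keys a \<and> tdeg b = k \<and> Poly_Mapping.keys b \<subseteq> Poly_Mapping.keys a"
proof -
  have "a \<noteq> 0" using assms unfolding tdeg_def by auto
  then obtain i where i: "i \<in> Poly_Mapping.keys a" by (meson ex_in_conv keys_eq_empty)
  define b where "b = a - Poly_Mapping.single i 1"
  have lb: "Poly_Mapping.lookup b j = Poly_Mapping.lookup a j - (if j = i then 1 else 0)" for j
    unfolding b_def by (simp add: lookup_minus lookup_single when_def)
  have ab: "a = b + Poly_Mapping.single i 1"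
    using i by (intro poly_mapping_eqI) (auto simp: lb lookup_add lookup_single when_def in_keys_iff)
  have kb: "Poly_Mapping.keys b \<subseteq> Poly_Mapping.keys a"
    by (auto simp: in_keys_iff lb split: if_splits)
  have "Suc (tdeg b) = Suc k" using tdeg_add_single[of b i] ab assms by simp
  then show ?thesis using ab i kb by blast
qed

lemma tdeg_induct:
  fixes P :: "(nat \<Rightarrow>\<^sub>0 nat) \<Rightarrow> bool"
  assumes "P 0" "\<And>b i. P b \<Longrightarrow> P (b + Poly_Mapping.single i 1)"
  shows "P a"
proof -
  have "\<forall>a. tdeg a = k \<longrightarrow> P a" for k
  proof (induction k)
    case 0
    then show ?case using assms(1) unfolding tdeg_def by (auto simp: in_keys_iff) (metis assms(1) poly_mapping_eqI lookup_zero)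
  next
    case (Suc k)
    then show ?case using tdeg_Suc assms(2) by metis
  qed
  then show ?thesis by blast
qed

lemma Mon_finite: "finite (Mon n d)"
proof (rule inj_on_finite)
  show "inj_on (\<lambda>a. restrict (Poly_Mapping.lookup a) {..<n}) (Mon n d)"
  proof (rule inj_onI)
    fix a b assume a: "a \<in> Mon n d" and b: "b \<in> Mon n d"
      and e: "restrict (Poly_Mapping.lookup a) {..<n} = restrict (Poly_Mapping.lookup b) {..<n}"
    show "a = b"
    proof (rule poly_mapping_eqI)
      fix k show "Poly_Mapping.lookup a k = Poly_Mapping.lookup b k"
      proof (cases "k < n")
        case True then show ?thesis using fun_cong[OF e, of k] by simp
      next
        case False
        then have "k \<notin> Poly_Mapping.keys a" "k \<notin> Poly_Mapping.keys b" using a b unfolding Mon_def by auto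
        then show ?thesis by (simp add: in_keys_iff)
      qed
    qed
  qed
  show "(\<lambda>a. restrict (Poly_Mapping.lookup a) {..<n}) ` Mon n d \<subseteq> PiE {..<n} (\<lambda>_. {..d})"
    unfolding Mon_def by (auto simp: PiE_def extensional_def intro: order_trans[OF lookup_le_tdeg])
  show "finite (PiE {..<n} (\<lambda>_. {..d}))" by (intro finite_PiE) auto
qed

lemma Mon_mono: "n \<le> n' \<Longrightarrow> d \<le> d' \<Longrightarrow> Mon n d \<subseteq> Mon n' d'"
  unfolding Mon_def by auto

lemma Mon_0: "0 \<in> Mon n d" unfolding Mon_def tdeg_def by simp

lemma Mon_step: "a \<in> Mon n d \<Longrightarrow> i < n \<Longrightarrow> a + Poly_Mapping.single i 1 \<in> Mon n (Suc d)"
  unfolding Mon_def using keys_add_single[of a i] tdeg_add_single[of a i] by auto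


context mlaF begin

definition cm :: "'i set \<Rightarrow> ('i \<Rightarrow> 'b) \<Rightarrow> ('i \<Rightarrow> 'k) \<Rightarrow> 'b" where
  "cm I fam c = (\<Sum>i\<in>I. sc (c i) (fam i))"

lemma cm_restrict: "cm I fam (restrict c I) = cm I fam c"
  unfolding cm_def by (rule sum.cong) auto

lemma span_cm:
  assumes "finite I"
  shows "V.span (fam ` I) = cm I fam ` PiE I (\<lambda>_. UNIV)"
proof
  show "cm I fam ` PiE I (\<lambda>_. UNIV) \<subseteq> V.span (fam ` I)"
  proof
    fix v assume "v \<in> cm I fam ` PiE I (\<lambda>_. UNIV)"
    then obtain c where v: "v = cm I fam c" by blast
    show "v \<in> V.span (fam ` I)" unfolding v cm_def
      by (rule V.span_sum, rule V.span_scale, rule V.span_base) simp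
  qed
next
  have r: "range (cm I fam) = cm I fam ` PiE I (\<lambda>_. UNIV)"
  proof
    show "range (cm I fam) \<subseteq> cm I fam ` PiE I (\<lambda>_. UNIV)"
    proof
      fix v assume "v \<in> range (cm I fam)"
      then obtain c where "v = cm I fam c" by blast
      then have "v = cm I fam (restrict c I)" by (simp add: cm_restrict)
      moreover have "restrict c I \<in> PiE I (\<lambda>_. UNIV)" by simp
      ultimately show "v \<in> cm I fam ` PiE I (\<lambda>_. UNIV)" by (rule image_eqI)
    qed
  qed (rule image_subsetI, rule rangeI)
  have "V.subspace (range (cm I fam))"
    unfolding V.subspace_def
  proof (intro conjI ballI allI)
    show "0 \<in> range (cm I fam)" by (rule range_eqI[of _ _ "\<lambda>_. 0"]) (simp add: cm_def)
  next
    fix x y assume "x \<in> range (cm I fam)" "y \<in> range (cm I fam)"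
    then obtain c c' where "x = cm I fam c" "y = cm I fam c'" by blast
    then show "x + y \<in> range (cm I fam)"
      by (intro range_eqI[of _ _ "\<lambda>i. c i + c' i"]) (simp add: cm_def V.scale_left_distrib sum.distrib)
  next
    fix a x assume "x \<in> range (cm I fam)"
    then obtain c where "x = cm I fam c" by blast
    then show "sc a x \<in> range (cm I fam)"
      by (intro range_eqI[of _ _ "\<lambda>i. a * c i"]) (simp add: cm_def V.scale_sum_right)
  qed
  moreover have "fam ` I \<subseteq> range (cm I fam)"
  proof
    fix v assume "v \<in> fam ` I"
    then obtain j where j: "j \<in> I" "v = fam j" by blast
    have "cm I fam (\<lambda>i. if i = j then 1 else 0) = (\<Sum>i\<in>I. if i = j then fam j else 0)"
      unfolding cm_def by (rule sum.cong) auto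
    also have "\<dots> = fam j" using j assms by (subst sum.delta) auto
    finally have fj: "cm I fam (\<lambda>i. if i = j then 1 else 0) = fam j" .
    have "v = cm I fam (\<lambda>i. if i = j then 1 else 0)" using j(2) fj by simp
    then show "v \<in> range (cm I fam)" by (rule range_eqI[where f="cm I fam" and x="\<lambda>i. if i = j then 1 else 0"])
  qed
  ultimately have "V.span (fam ` I) \<subseteq> range (cm I fam)"
    by (intro V.span_minimal)
  then show "V.span (fam ` I) \<subseteq> cm I fam ` PiE I (\<lambda>_. UNIV)"
    unfolding r .
qed

lemma card_PiE_k: "finite I \<Longrightarrow> card (PiE I (\<lambda>_. (UNIV :: 'k set))) = card (UNIV::'k set) ^ card I"
  by (simp add: card_PiE)

lemma span_card_le:
  assumes "finite I"
  shows "card (V.span (fam ` I)) \<le> card (UNIV::'k set) ^ card I"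
  unfolding span_cm[OF assms] card_PiE_k[OF assms, symmetric]
  by (rule card_image_le) (simp add: assms finite_PiE)

lemma span_finite: "finite I \<Longrightarrow> finite (V.span (fam ` I))"
  unfolding span_cm by (intro finite_imageI finite_PiE) auto

lemma indep_card:
  assumes "finite I" and ind: "\<And>c. cm I fam c = 0 \<Longrightarrow> \<forall>i\<in>I. c i = 0"
  shows "card (V.span (fam ` I)) = card (UNIV::'k set) ^ card I"
proof -
  have "inj_on (cm I fam) (PiE I (\<lambda>_. UNIV))"
  proof (rule inj_onI)
    fix c c' assume c: "c \<in> PiE I (\<lambda>_. UNIV)" and c': "c' \<in> PiE I (\<lambda>_. UNIV)" and e: "cm I fam c = cm I fam c'"
    have "cm I fam (\<lambda>i. c i - c' i) = cm I fam c - cm I fam c'"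
      unfolding cm_def by (simp add: V.scale_left_diff_distrib sum_subtractf)
    then have "cm I fam (\<lambda>i. c i - c' i) = 0" using e by simp
    then have "\<forall>i\<in>I. c i - c' i = 0" by (rule ind)
    then show "c = c'" using c c' by (intro PiE_ext) auto
  qed
  then show ?thesis unfolding span_cm[OF assms(1)] card_PiE_k[OF assms(1), symmetric]
    by (rule card_image)
qed

lemma card_indep:
  assumes "finite I" and cd: "card (V.span (fam ` I)) = card (UNIV::'k set) ^ card I"
    and c: "cm I fam c = 0"
  shows "\<forall>i\<in>I. c i = 0"
proof -
  have inj: "inj_on (cm I fam) (PiE I (\<lambda>_. UNIV))"
    by (rule eq_card_imp_inj_on) (use cd assms(1) in \<open>simp_all add: span_cm card_PiE_k finite_PiE\<close>)
  have eq: "cm I fam (restrict c I) = cm I fam (restrict (\<lambda>_. 0) I)"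
    using c by (simp add: cm_restrict cm_def)
  have m1: "restrict c I \<in> PiE I (\<lambda>_. (UNIV::'k set))" by simp
  have m2: "restrict (\<lambda>_. 0::'k) I \<in> PiE I (\<lambda>_. (UNIV::'k set))" by simp
  have "restrict c I = restrict (\<lambda>_. 0) I" using inj m1 m2 eq unfolding inj_on_def by blast
  then show ?thesis by (metis restrict_apply')
qed

end


context mlaC begin

lemma step_span:
  assumes w: "w \<in> V.span ((\<lambda>a. mon_act br u a s) ` Mon k d)" and y: "y \<in> V.span (Cp \<union> s ` {..<k})"
    and u: "u \<in> Cp"
  shows "br w y \<in> V.span ((\<lambda>a. mon_act br u a s) ` Mon k (Suc d))"
proof -
  let ?G = "\<lambda>a. mon_act br u a s"
  let ?S = "V.span (?G ` Mon k (Suc d))"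
  obtain c f where f: "f \<in> Cp" and yr: "y = (\<Sum>j<k. sc (c j) (s j)) + f" using span_repr[OF y] by blast
  have sub: "V.subspace {w. br w y \<in> ?S}"
    unfolding V.subspace_def by (auto simp: addL scL intro: V.span_add V.span_scale V.span_zero)
  have base: "br (?G a) y \<in> ?S" if a: "a \<in> Mon k d" for a
  proof -
    have Ga: "?G a \<in> Cp" using ma_Cp[OF u] by blast
    have "br (?G a) f = 0" using Ga f ab unfolding abelian_set_def by blast
    then have "br (?G a) y = (\<Sum>j<k. sc (c j) (br (?G a) (s j)))"
      unfolding yr by (simp add: addR sumR scR)
    also have "\<dots> = (\<Sum>j<k. sc (c j) (?G (a + Poly_Mapping.single j 1)))"
    proof (rule sum.cong[OF refl])
      fix j show "sc (c j) (br (?G a) (s j)) = sc (c j) (?G (a + Poly_Mapping.single j 1))"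
        using ma_step[OF u, of a j s] by simp
    qed
    also have "\<dots> \<in> ?S"
      using a Mon_step by (intro V.span_sum V.span_scale V.span_base) auto
    finally show ?thesis .
  qed
  have "V.span (?G ` Mon k d) \<subseteq> {w. br w y \<in> ?S}"
    using base sub by (intro V.span_minimal) auto
  then show ?thesis using w by blast
qed

lemma expand:
  assumes u: "u \<in> Cp" and t: "\<forall>i<p. t i \<in> V.span (Cp \<union> s ` {..<k})"
  shows "Poly_Mapping.keys a \<subseteq> {..<p} \<Longrightarrow> mon_act br u a t \<in> V.span ((\<lambda>b. mon_act br u b s) ` Mon k (tdeg a))"
proof (induction a rule: tdeg_induct)
  case 1
  have "tdeg 0 = 0" unfolding tdeg_def by simp
  have "mon_act br u 0 s \<in> (\<lambda>b. mon_act br u b s) ` Mon k 0" by (rule imageI[OF Mon_0])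
  then have "u \<in> V.span ((\<lambda>b. mon_act br u b s) ` Mon k 0)" by (simp add: V.span_base)
  then show ?case using \<open>tdeg 0 = 0\<close> by simp
next
  case (2 b i)
  have kb: "Poly_Mapping.keys b \<subseteq> {..<p}" and ip: "i < p"
    using 2(2) keys_add_single[of b i] by auto
  have "mon_act br u (b + Poly_Mapping.single i 1) t = br (mon_act br u b t) (t i)"
    by (rule ma_step[OF u])
  also have "\<dots> \<in> V.span ((\<lambda>b. mon_act br u b s) ` Mon k (Suc (tdeg b)))"
    using 2(1)[OF kb] t ip u by (intro step_span) auto
  finally show ?case using tdeg_add_single[of b i] by simp
qed

end

locale mlaCF = mlaC sc br for sc :: "'k::{field,finite} \<Rightarrow> 'b::ab_group_add \<Rightarrow> 'b" and br

sublocale mlaCF \<subseteq> mlaF ..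

context mlaF begin

lemma extend:
  assumes sp: "V.span (Cp \<union> b ` {..<n}) = UNIV" and x: "indepF m x"
  shows "\<exists>p z. m \<le> p \<and> p \<le> n \<and> (\<forall>i<m. z i = x i) \<and> indepF p z \<and> V.span (Cp \<union> z ` {..<p}) = UNIV"
proof -
  have "\<exists>p z. m \<le> p \<and> (\<forall>i<m. z i = x i) \<and> indepF p z \<and> (\<forall>i<j. b i \<in> V.span (Cp \<union> z ` {..<p}))" for j
  proof (induction j)
    case 0 then show ?case using x by blast
  next
    case (Suc j)
    then obtain p z where pz: "m \<le> p" "\<forall>i<m. z i = x i" "indepF p z" "\<forall>i<j. b i \<in> V.span (Cp \<union> z ` {..<p})"
      by blast
    show ?case
    proof (cases "indepF (Suc p) (z(p := b j))")
      case True
      have sub: "z ` {..<p} \<subseteq> (z(p := b j)) ` {..<Suc p}" by force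
      have "\<forall>i<Suc j. b i \<in> V.span (Cp \<union> (z(p := b j)) ` {..<Suc p})"
      proof (intro allI impI)
        fix i assume "i < Suc j"
        show "b i \<in> V.span (Cp \<union> (z(p := b j)) ` {..<Suc p})"
        proof (cases "i < j")
          case True
          then have "b i \<in> V.span (Cp \<union> z ` {..<p})" using pz by blast
          moreover have "V.span (Cp \<union> z ` {..<p}) \<subseteq> V.span (Cp \<union> (z(p := b j)) ` {..<Suc p})"
            using sub by (intro V.span_mono) auto
          ultimately show ?thesis by blast
        next
          case False
          then have "i = j" using \<open>i < Suc j\<close> by simp
          then have "b i = (z(p := b j)) p" by simp
          then show ?thesis by (auto intro: V.span_base)
        qed
      qed
      moreover have "m \<le> Suc p" "\<forall>i<m. (z(p := b j)) i = x i" using pz by auto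
      ultimately show ?thesis using True by blast
    next
      case False
      then have "b j \<in> V.span (Cp \<union> z ` {..<p})" using not_indep_ext pz(3) by blast
      then have "\<forall>i<Suc j. b i \<in> V.span (Cp \<union> z ` {..<p})" using pz(4) less_Suc_eq by auto
      then show ?thesis using pz by blast
    qed
  qed
  then obtain p z where pz: "m \<le> p" "\<forall>i<m. z i = x i" "indepF p z" "\<forall>i<n. b i \<in> V.span (Cp \<union> z ` {..<p})"
    by blast
  have "Cp \<union> b ` {..<n} \<subseteq> V.span (Cp \<union> z ` {..<p})" using pz(4) V.span_superset by blast
  then have "V.span (Cp \<union> b ` {..<n}) \<subseteq> V.span (Cp \<union> z ` {..<p})"
    by (intro V.span_minimal) auto
  then have spz: "V.span (Cp \<union> z ` {..<p}) = UNIV" using sp by auto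
  have "p \<le> n"
  proof (rule ccontr)
    assume "\<not> p \<le> n"
    then obtain c where c: "\<exists>i<p. c i \<noteq> 0" "(\<Sum>i<p. sc (c i) (z i)) \<in> Cp"
      using dep[of n p z b] sp by auto
    then show False using pz(3) unfolding indepF_def by blast
  qed
  then show ?thesis using pz spz by blast
qed

end


context mlaCF begin

lemma vs: "vector_space sc" by (rule V.vector_space_axioms)

lemma CL:
  assumes sp: "V.span (Cp \<union> b ` {..<n}) = UNIV"
    and tf: "\<forall>h. h \<noteq> 0 \<and> poly_in_vars n h \<longrightarrow> (\<forall>u\<in>Cp. poly_act sc br u h b = 0 \<longrightarrow> u = 0)"
    and x: "indepF m x" and u: "u \<in> Cp" and g: "g \<noteq> 0" "poly_in_vars m g"
    and pa: "poly_act sc br u g x = 0"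
  shows "u = 0"
proof (rule ccontr)
  assume u0: "u \<noteq> 0"
  obtain p z where pz: "m \<le> p" "p \<le> n" "\<forall>i<m. z i = x i" "indepF p z"
    and spz: "V.span (Cp \<union> z ` {..<p}) = UNIV"
    using extend[OF sp x] by blast
  define d where "d = Max (tdeg ` Poly_Mapping.keys g)"
  have kg: "Poly_Mapping.keys g \<subseteq> Mon p d"
  proof
    fix a assume a: "a \<in> Poly_Mapping.keys g"
    have "Poly_Mapping.keys a \<subseteq> {..<m}" using g(2) a unfolding poly_in_vars_def by blast
    moreover have "tdeg a \<le> d" unfolding d_def using a by (intro Max_ge) auto
    ultimately show "a \<in> Mon p d" unfolding Mon_def using pz(1) by auto
  qed
  let ?Fb = "\<lambda>a. mon_act br u a b"
  let ?Fz = "\<lambda>a. mon_act br u a z"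
  have WV: "V.span (?Fz ` Mon p d) \<subseteq> V.span (?Fb ` Mon n d)"
  proof (rule V.span_minimal)
    show "?Fz ` Mon p d \<subseteq> V.span (?Fb ` Mon n d)"
    proof
      fix v assume "v \<in> ?Fz ` Mon p d"
      then obtain a where a: "a \<in> Mon p d" "v = ?Fz a" by blast
      have "v \<in> V.span (?Fb ` Mon n (tdeg a))"
        unfolding a(2) by (rule expand[OF u]) (use sp a in \<open>auto simp: Mon_def\<close>)
      moreover have "V.span (?Fb ` Mon n (tdeg a)) \<subseteq> V.span (?Fb ` Mon n d)"
        using a(1) Mon_mono[of n n "tdeg a" d] unfolding Mon_def by (intro V.span_mono image_mono) auto
      ultimately show "v \<in> V.span (?Fb ` Mon n d)" by blast
    qed
  qed simp
  have VW: "V.span (?Fb ` Mon n d) \<subseteq> V.span (?Fz ` Mon p d)"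
  proof (rule V.span_minimal)
    show "?Fb ` Mon n d \<subseteq> V.span (?Fz ` Mon p d)"
    proof
      fix v assume "v \<in> ?Fb ` Mon n d"
      then obtain a where a: "a \<in> Mon n d" "v = ?Fb a" by blast
      have "v \<in> V.span (?Fz ` Mon p (tdeg a))"
        unfolding a(2) by (rule expand[OF u]) (use spz a in \<open>auto simp: Mon_def\<close>)
      moreover have "V.span (?Fz ` Mon p (tdeg a)) \<subseteq> V.span (?Fz ` Mon p d)"
        using a(1) Mon_mono[of p p "tdeg a" d] unfolding Mon_def by (intro V.span_mono image_mono) auto
      ultimately show "v \<in> V.span (?Fz ` Mon p d)" by blast
    qed
  qed simp
  have cardV: "card (V.span (?Fb ` Mon n d)) = card (UNIV::'k set) ^ card (Mon n d)"
  proof (rule indep_card[OF Mon_finite])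
    fix c assume c: "cm (Mon n d) ?Fb c = 0"
    define h where "h = Abs_poly_mapping (\<lambda>a. if a \<in> Mon n d then c a else 0)"
    have fin: "finite {a. (if a \<in> Mon n d then c a else 0) \<noteq> 0}"
      by (rule finite_subset[OF _ Mon_finite[of n d]]) (auto split: if_splits)
    have lh: "Poly_Mapping.lookup h = (\<lambda>a. if a \<in> Mon n d then c a else 0)"
      unfolding h_def using fin by simp
    have kh: "Poly_Mapping.keys h \<subseteq> Mon n d" by (auto simp: in_keys_iff lh split: if_splits)
    have piv: "poly_in_vars n h" using kh unfolding poly_in_vars_def Mon_def by auto
    have "poly_act sc br u h b = (\<Sum>a\<in>Mon n d. sc (Poly_Mapping.lookup h a) (?Fb a))"
      by (rule pa_superset[OF Mon_finite kh vs])
    also have "\<dots> = cm (Mon n d) ?Fb c" unfolding cm_def by (rule sum.cong) (auto simp: lh)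
    finally have "poly_act sc br u h b = 0" using c by simp
    then have "h = 0" using tf piv u u0 by blast
    then show "\<forall>a\<in>Mon n d. c a = 0" using lh by (metis lookup_zero)
  qed
  have "card (Mon p d) \<le> card (Mon n d)" by (intro card_mono Mon_finite Mon_mono) (use pz in auto)
  then have "card (UNIV::'k set) ^ card (Mon p d) \<le> card (UNIV::'k set) ^ card (Mon n d)"
    using card_k2 by (intro power_increasing) auto
  moreover have "card (V.span (?Fz ` Mon p d)) \<le> card (UNIV::'k set) ^ card (Mon p d)"
    by (rule span_card_le[OF Mon_finite])
  moreover have "V.span (?Fz ` Mon p d) = V.span (?Fb ` Mon n d)" using WV VW by blast
  ultimately have cardW: "card (V.span (?Fz ` Mon p d)) = card (UNIV::'k set) ^ card (Mon p d)"
    using cardV by simp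
  have "poly_act sc br u g z = poly_act sc br u g x"
    unfolding poly_act_def
  proof (rule sum.cong[OF refl])
    fix a assume a: "a \<in> Poly_Mapping.keys g"
    have "Poly_Mapping.keys a \<subseteq> {..<m}" using g(2) a unfolding poly_in_vars_def by blast
    then have "mon_act br u a z = mon_act br u a x" using pz(3) by (intro ma_cong) auto
    then show "sc (Poly_Mapping.lookup g a) (mon_act br u a z) = sc (Poly_Mapping.lookup g a) (mon_act br u a x)"
      by simp
  qed
  then have "cm (Mon p d) ?Fz (Poly_Mapping.lookup g) = 0"
    unfolding cm_def using pa pa_superset[OF Mon_finite kg vs] by simp
  then have "\<forall>a\<in>Mon p d. Poly_Mapping.lookup g a = 0" by (rule card_indep[OF Mon_finite cardW])
  moreover obtain a where "a \<in> Poly_Mapping.keys g" using g(1) by (metis ex_in_conv keys_eq_empty)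
  ultimately show False using kg by (metis in_keys_iff subsetD)
qed

end


definition lin :: "nat \<Rightarrow> (nat \<Rightarrow> 'k::field) \<Rightarrow> ((nat \<Rightarrow>\<^sub>0 nat) \<Rightarrow>\<^sub>0 'k)" where
  "lin n c = (\<Sum>i<n. Poly_Mapping.single (Poly_Mapping.single i 1) (c i))"

lemma single1_eq: "(Poly_Mapping.single i (1::nat) = Poly_Mapping.single j 1) \<longleftrightarrow> i = j"
  by (metis lookup_single_eq lookup_single_not_eq one_neq_zero)

lemma single1_eq'[simp]: "(Poly_Mapping.single i (Suc 0) = Poly_Mapping.single j (Suc 0)) \<longleftrightarrow> i = j"
  using single1_eq by simp

lemma lookup_lin: "j < n \<Longrightarrow> Poly_Mapping.lookup (lin n c) (Poly_Mapping.single j 1) = c j"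
proof -
  assume j: "j < n"
  have "Poly_Mapping.lookup (lin n c) (Poly_Mapping.single j 1) = (\<Sum>i<n. if i = j then c i else 0)"
    unfolding lin_def lookup_sum by (rule sum.cong) (auto simp: lookup_single when_def single1_eq)
  also have "\<dots> = c j" using j by (subst sum.delta) auto
  finally show ?thesis .
qed

lemma keys_lin: "Poly_Mapping.keys (lin n c) \<subseteq> (\<lambda>i. Poly_Mapping.single i 1) ` {..<n}"
proof -
  have "Poly_Mapping.keys (lin n c) \<subseteq> (\<Union>i\<in>{..<n}. Poly_Mapping.keys (Poly_Mapping.single (Poly_Mapping.single i (1::nat)) (c i)))"
    unfolding lin_def by (rule keys_sum)
  also have "\<dots> \<subseteq> (\<lambda>i. Poly_Mapping.single i 1) ` {..<n}" by auto
  finally show ?thesis .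
qed

lemma lin_nz: "j < n \<Longrightarrow> c j \<noteq> 0 \<Longrightarrow> lin n c \<noteq> 0"
  using lookup_lin by (metis lookup_zero)

lemma lin_vars: "poly_in_vars n (lin n c)"
  unfolding poly_in_vars_def using keys_lin by fastforce

context mla begin

lemma pa_lin: "poly_act sc br w (lin n c) t = br w (\<Sum>i<n. sc (c i) (t i))"
proof -
  let ?I = "(\<lambda>i. Poly_Mapping.single i (1::nat)) ` {..<n}"
  have "poly_act sc br w (lin n c) t = (\<Sum>a\<in>?I. sc (Poly_Mapping.lookup (lin n c) a) (mon_act br w a t))"
    by (rule pa_superset) (use keys_lin[of n c] V.vector_space_axioms in auto)
  also have "\<dots> = (\<Sum>i<n. sc (Poly_Mapping.lookup (lin n c) (Poly_Mapping.single i 1)) (mon_act br w (Poly_Mapping.single i 1) t))"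
    by (rule sum.reindex_cong[where l="\<lambda>i. Poly_Mapping.single i 1"]) (auto simp: inj_on_def single1_eq)
  also have "\<dots> = (\<Sum>i<n. sc (c i) (br w (t i)))"
  proof (rule sum.cong[OF refl])
    fix i assume "i \<in> {..<n}"
    then show "sc (Poly_Mapping.lookup (lin n c) (Poly_Mapping.single i 1)) (mon_act br w (Poly_Mapping.single i 1) t) = sc (c i) (br w (t i))"
      by (simp only: lookup_lin ma_single lessThan_iff)
  qed
  finally show ?thesis by (simp add: sumR scR)
qed

lemma phi_indep: assumes P2: "Phi2 br" shows "phi sc br n x = indepF n x"
proof -
  have "fitf br v \<longleftrightarrow> v \<in> Cp" for v using fitf_Cp fitf_imp_Cp[OF P2] by blast
  then show ?thesis unfolding phi_def indepF_def by blast
qed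

lemma indep1: "y \<notin> Cp \<Longrightarrow> indepF 1 (\<lambda>_. y)"
  unfolding indepF_def
proof (intro allI impI)
  fix c :: "nat \<Rightarrow> 'k" and i assume "y \<notin> Cp" "(\<Sum>i<1. sc (c i) y) \<in> Cp" "i < (1::nat)"
  then show "c i = 0" using Cp_sc[of "sc (c 0) y" "inverse (c 0)"] by (cases "c 0 = 0") auto
qed

end

context mlaCF begin

lemma TF1:
  assumes sp: "V.span (Cp \<union> b ` {..<n}) = UNIV"
    and tf: "\<forall>h. h \<noteq> 0 \<and> poly_in_vars n h \<longrightarrow> (\<forall>u\<in>Cp. poly_act sc br u h b = 0 \<longrightarrow> u = 0)"
    and u: "u \<in> Cp" and y: "y \<notin> Cp" and uy: "br u y = 0"
  shows "u = 0"
proof (rule CL[OF sp tf indep1[OF y] u])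
  show "lin 1 (\<lambda>_. 1) \<noteq> 0" by (rule lin_nz[of 0]) auto
  show "poly_in_vars 1 (lin 1 (\<lambda>_. 1::'k))" by (rule lin_vars)
  show "poly_act sc br u (lin 1 (\<lambda>_. 1)) (\<lambda>_. y) = 0" using uy by (simp add: pa_lin)
qed

lemma U_Phi2:
  assumes sp: "V.span (Cp \<union> b ` {..<n}) = UNIV"
    and tf: "\<forall>h. h \<noteq> 0 \<and> poly_in_vars n h \<longrightarrow> (\<forall>u\<in>Cp. poly_act sc br u h b = 0 \<longrightarrow> u = 0)"
  shows "Phi2 br"
  unfolding Phi2_def
proof (intro allI impI)
  fix x y assume h: "br (br x y) x = 0 \<and> br (br x y) y = 0"
  show "br x y = 0"
  proof (cases "x \<in> Cp")
    case False then show ?thesis using TF1[OF sp tf prod_Cp False] h by blast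
  next
    case True
    show ?thesis
    proof (cases "y \<in> Cp")
      case False then show ?thesis using TF1[OF sp tf prod_Cp False] h by blast
    next
      case True
      then show ?thesis using \<open>x \<in> Cp\<close> ab unfolding abelian_set_def by blast
    qed
  qed
qed

lemma U_Phi3:
  assumes sp: "V.span (Cp \<union> b ` {..<n}) = UNIV"
    and tf: "\<forall>h. h \<noteq> 0 \<and> poly_in_vars n h \<longrightarrow> (\<forall>u\<in>Cp. poly_act sc br u h b = 0 \<longrightarrow> u = 0)"
  shows "Phi3 br"
  unfolding Phi3_def
proof (intro allI impI)
  fix x y z assume h: "x \<noteq> 0 \<and> br x y = 0 \<and> br x z = 0"
  note T = TF1[OF sp tf]
  show "br y z = 0"
  proof (cases "x \<in> Cp")
    case True
    have "y \<in> Cp" using T[OF True] h by blast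
    moreover have "z \<in> Cp" using T[OF True] h by blast
    ultimately show ?thesis using ab unfolding abelian_set_def by blast
  next
    case False
    show ?thesis
    proof (cases "y \<in> Cp")
      case True
      have "br y x = 0" using h anti[of y x] by simp
      then have "y = 0" using T[OF True False] by blast
      then show ?thesis by simp
    next
      case yC: False
      show ?thesis
      proof (cases "z \<in> Cp")
        case True
        have "br z x = 0" using h anti[of z x] by simp
        then have "z = 0" using T[OF True False] by blast
        then show ?thesis by simp
      next
        case zC: False
        have "br x (br y z) + br y (br z x) + br z (br x y) = 0" by (rule jac)
        moreover have "br z x = 0" using h anti[of z x] by simp
        ultimately have "br x (br y z) = 0" using h by simp
        then have "br (br y z) x = 0" using anti[of "br y z" x] by simp
        then show ?thesis using T[OF prod_Cp False] by blast
      qed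
    qed
  qed
qed

lemma Phi4_from:
  assumes sp: "V.span (Cp \<union> b ` {..<n}) = UNIV" and nr: "n \<le> r"
  shows "Phi4 sc br r"
  unfolding Phi4_def
proof
  fix x
  obtain c where c: "\<exists>i<Suc r. c i \<noteq> 0" "(\<Sum>i<Suc r. sc (c i) (x i)) \<in> Cp"
    using dep[of n "Suc r" x b] sp nr by auto
  then show "\<not> phi sc br (Suc r) x" unfolding phi_def using fitf_Cp by blast
qed

end


definition tbr :: "(nat \<Rightarrow>\<^sub>0 'k::field) \<Rightarrow> (nat \<Rightarrow>\<^sub>0 'k) \<Rightarrow> (nat \<Rightarrow>\<^sub>0 'k)" where
  "tbr v w = Poly_Mapping.single 1 (Poly_Mapping.lookup v 1 * Poly_Mapping.lookup w 0 - Poly_Mapping.lookup v 0 * Poly_Mapping.lookup w 1)"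

lemma lk_sc: "Poly_Mapping.lookup (std_scale c v) k = c * Poly_Mapping.lookup v k"
  unfolding std_scale_def by (simp add: map.rep_eq when_def)

lemma lk_tbr: "Poly_Mapping.lookup (tbr v w) k = (if k = 1 then Poly_Mapping.lookup v 1 * Poly_Mapping.lookup w 0 - Poly_Mapping.lookup v 0 * Poly_Mapping.lookup w 1 else 0)"
  unfolding tbr_def by (simp add: lookup_single when_def)

lemma vs_std: "vector_space (std_scale :: 'k::field \<Rightarrow> _)"
  unfolding vector_space_def
  by (intro conjI allI poly_mapping_eqI) (simp_all add: lk_sc lookup_add algebra_simps)

lemma lie_tbr: "lie_algebra std_scale (tbr :: (nat \<Rightarrow>\<^sub>0 'k::field) \<Rightarrow> _)"
  unfolding lie_algebra_def
  by (intro conjI allI vs_std poly_mapping_eqI) (simp_all add: lk_tbr lk_sc lookup_add algebra_simps)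

lemma met_tbr: "metabelian (tbr :: (nat \<Rightarrow>\<^sub>0 'k::field) \<Rightarrow> _)"
  unfolding metabelian_def by (intro allI poly_mapping_eqI) (simp add: lk_tbr)

context mla begin

definition GS :: "nat \<Rightarrow> (nat \<Rightarrow> 'b) \<Rightarrow> 'b set" where "GS r a = gen_subalg sc br (a ` {..<r})"

lemma GS_I:
  assumes "\<And>S. V.subspace S \<Longrightarrow> a ` {..<r} \<subseteq> S \<Longrightarrow> (\<forall>x\<in>S. \<forall>y\<in>S. br x y \<in> S) \<Longrightarrow> x \<in> S"
  shows "x \<in> GS r a"
  unfolding GS_def gen_subalg_def using assms by blast

lemma GS_D:
  assumes "x \<in> GS r a" "V.subspace S" "a ` {..<r} \<subseteq> S" "\<forall>x\<in>S. \<forall>y\<in>S. br x y \<in> S"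
  shows "x \<in> S"
  using assms unfolding GS_def gen_subalg_def by blast

lemma GS_base: "i < r \<Longrightarrow> a i \<in> GS r a" by (rule GS_I) auto
lemma GS_add: "x \<in> GS r a \<Longrightarrow> y \<in> GS r a \<Longrightarrow> x + y \<in> GS r a"
  by (rule GS_I) (meson GS_D V.subspace_add)
lemma GS_sc: "x \<in> GS r a \<Longrightarrow> sc c x \<in> GS r a"
  by (rule GS_I) (meson GS_D V.subspace_scale)
lemma GS_br: "x \<in> GS r a \<Longrightarrow> y \<in> GS r a \<Longrightarrow> br x y \<in> GS r a"
  by (rule GS_I) (meson GS_D)
lemma GS_0: "0 \<in> GS r a"
  by (rule GS_I) (rule V.subspace_0)

lemma Fr_hom:
  assumes Fr: "free_metabelian_on sc br r a"
  shows "\<exists>h. lie_hom_on sc br std_scale tbr (GS r a) h \<and> (\<forall>i<r. h (a i) = c i)"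
  using Fr lie_tbr met_tbr unfolding free_metabelian_on_def GS_def Let_def by blast

lemma hom_0: assumes "lie_hom_on sc br std_scale tbr (GS r a) h" shows "h 0 = 0"
proof -
  have "h (0 + 0) = h 0 + h 0" using assms GS_0 unfolding lie_hom_on_def by blast
  then have "h 0 + h 0 = h 0 + 0" by simp
  then show ?thesis by (rule add_left_imp_eq)
qed

lemma hom_sum:
  fixes n :: nat
  assumes h: "lie_hom_on sc br std_scale tbr (GS r a) h"
  shows "n \<le> r \<Longrightarrow> h (\<Sum>i<n. sc (c i) (a i)) = (\<Sum>i<n. std_scale (c i) (h (a i)))
     \<and> (\<Sum>i<n. sc (c i) (a i)) \<in> GS r a"
proof (induction n)
  case 0 then show ?case using hom_0[OF h] GS_0 by simp
next
  case (Suc n)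
  then have IH: "h (\<Sum>i<n. sc (c i) (a i)) = (\<Sum>i<n. std_scale (c i) (h (a i)))"
    "(\<Sum>i<n. sc (c i) (a i)) \<in> GS r a" by auto
  have an: "sc (c n) (a n) \<in> GS r a" using Suc(2) by (intro GS_sc GS_base) simp
  show ?case using IH an h unfolding lie_hom_on_def using Suc(2) GS_base
    by (simp add: GS_add)
qed

lemma Fr_nonab:
  assumes Fr: "free_metabelian_on sc br r a" and r: "2 \<le> r"
  shows "br (a 0) (a 1) \<noteq> 0"
proof
  assume z: "br (a 0) (a 1) = 0"
  define c where "c i = (if i = 0 then Poly_Mapping.single (0::nat) 1 else Poly_Mapping.single (1::nat) (1::'k))" for i :: nat
  obtain h where h: "lie_hom_on sc br std_scale tbr (GS r a) h" "\<forall>i<r. h (a i) = c i"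
    using Fr_hom[OF Fr] by blast
  have "h (br (a 0) (a 1)) = tbr (h (a 0)) (h (a 1))"
    using h(1) GS_base r unfolding lie_hom_on_def by auto
  also have "\<dots> = tbr (c 0) (c 1)" using h(2) r by auto
  finally have "tbr (c 0) (c 1) = 0" using z hom_0[OF h(1)] by simp
  then have "Poly_Mapping.lookup (tbr (c 0) (c 1)) 1 = 0" by simp
  then show False unfolding c_def by (simp add: lk_tbr lookup_single lookup_one when_def)
qed

lemma Fr_indep:
  assumes Fr: "free_metabelian_on sc br r a" and r: "2 \<le> r"
    and CpF: "\<And>x. x \<in> Cp \<Longrightarrow> fitf br x"
  shows "indepF r a"
  unfolding indepF_def
proof (rule allI, rule impI, rule ccontr)
  fix c assume xC: "(\<Sum>i<r. sc (c i) (a i)) \<in> Cp" and "\<not> (\<forall>i<r. c i = 0)"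
  then obtain j where j: "j < r" "c j \<noteq> 0" by blast
  define i where "i = (if j = 0 then 1 else (0::nat))"
  have i: "i < r" "i \<noteq> j" unfolding i_def using r by auto
  define v where "v l = (if l = j then Poly_Mapping.single (0::nat) (inverse (c j)) else if l = i then Poly_Mapping.single (1::nat) 1 else 0)" for l
  obtain h where h: "lie_hom_on sc br std_scale tbr (GS r a) h" "\<forall>l<r. h (a l) = v l"
    using Fr_hom[OF Fr] by blast
  let ?x = "\<Sum>l<r. sc (c l) (a l)"
  have hx: "h ?x = (\<Sum>l<r. std_scale (c l) (v l))" "?x \<in> GS r a"
    using hom_sum[OF h(1), of r c] h(2) by auto
  have "Poly_Mapping.lookup (h ?x) 0 = (\<Sum>l<r. c l * Poly_Mapping.lookup (v l) 0)"
    unfolding hx(1) lookup_sum by (simp add: lk_sc)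
  also have "\<dots> = (\<Sum>l<r. if l = j then 1 else 0)"
    by (rule sum.cong) (use j i in \<open>auto simp: v_def lookup_single\<close>)
  also have "\<dots> = 1" using j by (subst sum.delta) auto
  finally have hx0: "Poly_Mapping.lookup (h ?x) 0 = 1" .
  have ai: "a i \<in> GS r a" using i GS_base by blast
  have "h (br (br ?x (a i)) ?x) = tbr (tbr (h ?x) (h (a i))) (h ?x)"
    using h(1) hx(2) ai GS_br unfolding lie_hom_on_def by simp
  also have "h (a i) = Poly_Mapping.single 1 1" using h(2) i unfolding v_def by simp
  finally have e: "h (br (br ?x (a i)) ?x) = tbr (tbr (h ?x) (Poly_Mapping.single 1 1)) (h ?x)" .
  have "br (br ?x (a i)) ?x = 0" using CpF[OF xC] unfolding fitf_def by blast
  then have "tbr (tbr (h ?x) (Poly_Mapping.single 1 1)) (h ?x) = 0" using e hom_0[OF h(1)] by simp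
  then have "Poly_Mapping.lookup (tbr (tbr (h ?x) (Poly_Mapping.single 1 1)) (h ?x)) 1 = 0" by simp
  then show False using hx0 by (simp add: lk_tbr lookup_single)
qed

end


context mlaCF begin

lemma lhs_basis:
  assumes P2: "Phi2 br" and P4: "Phi4 sc br r"
  shows "\<exists>n b. n \<le> r \<and> indepF n b \<and> V.span (Cp \<union> b ` {..<n}) = UNIV"
proof -
  have bound: "p \<le> r" if "indepF p y" for p y
  proof (rule ccontr)
    assume "\<not> p \<le> r"
    then have "Suc r \<le> p" by simp
    then have "indepF (Suc r) y" by (rule indepF_mono[OF that])
    then have "phi sc br (Suc r) y" using phi_indep[OF P2] by simp
    then show False using P4 unfolding Phi4_def by blast
  qed
  define S where "S = {p. \<exists>y. indepF p y}"
  have "indepF 0 y" for y unfolding indepF_def by simp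
  then have S0: "0 \<in> S" unfolding S_def by blast
  have "S \<subseteq> {..r}" unfolding S_def using bound by blast
  then have fin: "finite S" by (rule finite_subset) simp
  define p where "p = Max S"
  have "S \<noteq> {}" using S0 by blast
  then have "p \<in> S" unfolding p_def using fin by (intro Max_in)
  then obtain y where y: "indepF p y" unfolding S_def by blast
  have "v \<in> V.span (Cp \<union> y ` {..<p})" for v
  proof (rule not_indep_ext[OF y])
    show "\<not> indepF (Suc p) (y(p := v))"
    proof
      assume "indepF (Suc p) (y(p := v))"
      then have "Suc p \<in> S" unfolding S_def by blast
      then have "Suc p \<le> p" unfolding p_def using fin by (rule Max_ge[rotated])
      then show False by simp
    qed
  qed
  then have "V.span (Cp \<union> y ` {..<p}) = UNIV" by blast
  then show ?thesis using y bound[OF y] by blast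
qed

lemma tf_Phi5:
  assumes P2: "Phi2 br" and P3: "Phi3 br" and P5: "Phi5 sc br r"
    and nr: "n \<le> r" and ind: "indepF n b" and sp: "V.span (Cp \<union> b ` {..<n}) = UNIV"
  shows "\<forall>f. f \<noteq> 0 \<and> poly_in_vars n f \<longrightarrow> (\<forall>u\<in>Cp. poly_act sc br u f b = 0 \<longrightarrow> u = 0)"
proof (intro allI impI ballI)
  fix f u assume f: "f \<noteq> 0 \<and> poly_in_vars n f" and u: "u \<in> Cp" and pa: "poly_act sc br u f b = 0"
  have ph: "phi sc br n b" using phi_indep[OF P2] ind by simp
  show "u = 0"
  proof (rule tf_core[OF P3 sp ind u pa])
    show "f \<noteq> 0" "poly_in_vars n f" using f by auto
    fix i assume "i < n" "poly_act sc br (br u (b i)) f b = 0"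
    then show "br u (b i) = 0"
    proof -
      assume h: "poly_act sc br (br u (b i)) f b = 0"
      have "\<forall>z1 z2 x. poly_act sc br (br z1 z2) f x = 0 \<and> br z1 z2 \<noteq> 0 \<longrightarrow> \<not> phi sc br n x"
        using P5 nr f unfolding Phi5_def by blast
      then have "poly_act sc br (br u (b i)) f b = 0 \<and> br u (b i) \<noteq> 0 \<longrightarrow> \<not> phi sc br n b" by blast
      then show ?thesis using h ph by blast
    qed
  qed
qed

lemma tf_Phi5':
  assumes P3: "Phi3 br" and P5: "Phi5' sc br r a"
    and ind: "indepF r a" and sp: "V.span (Cp \<union> a ` {..<r}) = UNIV"
  shows "\<forall>f. f \<noteq> 0 \<and> poly_in_vars r f \<longrightarrow> (\<forall>u\<in>Cp. poly_act sc br u f a = 0 \<longrightarrow> u = 0)"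
proof (intro allI impI ballI)
  fix f u assume f: "f \<noteq> 0 \<and> poly_in_vars r f" and u: "u \<in> Cp" and pa: "poly_act sc br u f a = 0"
  show "u = 0"
  proof (rule tf_core[OF P3 sp ind u pa])
    show "f \<noteq> 0" "poly_in_vars r f" using f by auto
    fix i assume "i < r" "poly_act sc br (br u (a i)) f a = 0"
    then show "br u (a i) = 0"
    proof -
      assume h: "poly_act sc br (br u (a i)) f a = 0"
      have "\<forall>z1 z2. poly_act sc br (br z1 z2) f a = 0 \<longrightarrow> br z1 z2 = 0"
        using P5 f unfolding Phi5'_def by blast
      then show ?thesis using h by blast
    qed
  qed
qed

lemma qb_iff: "quot_basis sc Cp b n \<longleftrightarrow> indepF n b \<and> V.span (Cp \<union> b ` {..<n}) = UNIV"
  unfolding quot_basis_def indepF_def by simp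

end

theorem lemma3p6:
  fixes sc :: "'k::{field,finite} \<Rightarrow> 'b::ab_group_add \<Rightarrow> 'b"
    and br :: "'b \<Rightarrow> 'b \<Rightarrow> 'b"
    and r :: nat
    and a :: "nat \<Rightarrow> 'b"
  assumes "r \<ge> 2"
  shows "(lie_algebra sc br \<longrightarrow>
            ((Phi1 br \<and> Phi2 br \<and> Phi3 br \<and> Phi4 sc br r \<and> Phi5 sc br r)
             \<longleftrightarrow> (U_algebra sc br \<and> (\<exists>n\<le>r. quot_dim sc (Fit sc br) n))))
       \<and> (Fr_lie_algebra sc br r a \<longrightarrow>
            ((Phi1 br \<and> Phi2 br \<and> Phi3 br \<and> Phi4 sc br r \<and> Phi5' sc br r a)
             \<longleftrightarrow> (U_algebra sc br \<and> quot_dim sc (Fit sc br) r)))"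
proof (intro conjI impI)
  assume lie: "lie_algebra sc br"
  show "(Phi1 br \<and> Phi2 br \<and> Phi3 br \<and> Phi4 sc br r \<and> Phi5 sc br r)
             \<longleftrightarrow> (U_algebra sc br \<and> (\<exists>n\<le>r. quot_dim sc (Fit sc br) n))"
  proof
    assume L: "Phi1 br \<and> Phi2 br \<and> Phi3 br \<and> Phi4 sc br r \<and> Phi5 sc br r"
    have mt: "metabelian br" using L unfolding Phi1_def metabelian_def by blast
    interpret mla sc br using lie mt by unfold_locales
    have P2: "Phi2 br" using L by blast
    have FC: "Fit sc br = Cp" by (rule Fit_eq_Phi2[OF P2])
    have abC: "abelian_set br Cp" by (rule Cp_abelian_Phi2[OF P2])
    interpret C: mlaCF sc br using lie mt abC by unfold_locales
    obtain n b where nb: "n \<le> r" "indepF n b" "V.span (Cp \<union> b ` {..<n}) = UNIV"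
      using C.lhs_basis[OF P2] L by blast
    have tf: "\<forall>f. f \<noteq> 0 \<and> poly_in_vars n f \<longrightarrow> (\<forall>u\<in>Cp. poly_act sc br u f b = 0 \<longrightarrow> u = 0)"
      using C.tf_Phi5[OF P2 _ _ nb] L by blast
    have qb: "quot_basis sc Cp b n" using nb C.qb_iff by blast
    show "U_algebra sc br \<and> (\<exists>n\<le>r. quot_dim sc (Fit sc br) n)"
      unfolding U_algebra_def quot_dim_def FC using lie mt abC qb tf nb(1) by blast
  next
    assume R: "U_algebra sc br \<and> (\<exists>n\<le>r. quot_dim sc (Fit sc br) n)"
    have mt: "metabelian br" using R unfolding U_algebra_def by blast
    interpret mla sc br using lie mt by unfold_locales
    have abF: "abelian_set br (Fit sc br)" using R unfolding U_algebra_def by blast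
    have FC: "Fit sc br = Cp" by (rule Fit_eq_U[OF abF])
    have abC: "abelian_set br Cp" using abF FC by simp
    interpret C: mlaCF sc br using lie mt abC by unfold_locales
    obtain n b where qb: "quot_basis sc Cp b n"
      and tf: "\<forall>f. f \<noteq> 0 \<and> poly_in_vars n f \<longrightarrow> (\<forall>u\<in>Cp. poly_act sc br u f b = 0 \<longrightarrow> u = 0)"
      using R unfolding U_algebra_def FC by blast
    have sp: "V.span (Cp \<union> b ` {..<n}) = UNIV" using qb C.qb_iff by blast
    obtain n' b' where qb': "quot_basis sc Cp b' n'" "n' \<le> r"
      using R unfolding quot_dim_def FC by blast
    have sp': "V.span (Cp \<union> b' ` {..<n'}) = UNIV" using qb' C.qb_iff by blast
    have P2: "Phi2 br" by (rule C.U_Phi2[OF sp tf])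
    have P3: "Phi3 br" by (rule C.U_Phi3[OF sp tf])
    have P4: "Phi4 sc br r" by (rule C.Phi4_from[OF sp' qb'(2)])
    have P1: "Phi1 br" using mt unfolding Phi1_def metabelian_def by blast
    have P5: "Phi5 sc br r"
      unfolding Phi5_def
    proof (intro allI impI notI)
      fix m f z1 z2 x
      assume m: "m \<le> r" and f: "f \<noteq> 0 \<and> poly_in_vars m f"
        and h: "poly_act sc br (br z1 z2) f x = 0 \<and> br z1 z2 \<noteq> 0" and ph: "phi sc br m x"
      have "indepF m x" using ph phi_indep[OF P2] by simp
      then have "br z1 z2 = 0" using C.CL[OF sp tf _ prod_Cp] f h by blast
      then show False using h by simp
    qed
    show "Phi1 br \<and> Phi2 br \<and> Phi3 br \<and> Phi4 sc br r \<and> Phi5 sc br r"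
      using P1 P2 P3 P4 P5 by blast
  qed
next
  assume Fr: "Fr_lie_algebra sc br r a"
  have lie: "lie_algebra sc br" and fm: "free_metabelian_on sc br r a"
    using Fr unfolding Fr_lie_algebra_def by auto
  show "(Phi1 br \<and> Phi2 br \<and> Phi3 br \<and> Phi4 sc br r \<and> Phi5' sc br r a)
             \<longleftrightarrow> (U_algebra sc br \<and> quot_dim sc (Fit sc br) r)"
  proof
    assume L: "Phi1 br \<and> Phi2 br \<and> Phi3 br \<and> Phi4 sc br r \<and> Phi5' sc br r a"
    have mt: "metabelian br" using L unfolding Phi1_def metabelian_def by blast
    interpret mla sc br using lie mt by unfold_locales
    have P2: "Phi2 br" using L by blast
    have FC: "Fit sc br = Cp" by (rule Fit_eq_Phi2[OF P2])
    have abC: "abelian_set br Cp" by (rule Cp_abelian_Phi2[OF P2])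
    interpret C: mlaCF sc br using lie mt abC by unfold_locales
    have nonab: "br (a 0) (a 1) \<noteq> 0" by (rule Fr_nonab[OF fm assms])
    have ind: "indepF r a"
      unfolding indepF_def
    proof (rule allI, rule impI, rule ccontr)
      fix c assume xC: "(\<Sum>i<r. sc (c i) (a i)) \<in> Cp" and "\<not> (\<forall>i<r. c i = 0)"
      then obtain j where j: "j < r" "c j \<noteq> 0" by blast
      have "lin r c \<noteq> 0" by (rule lin_nz[of j r c, OF j])
      moreover have "poly_in_vars r (lin r c)" by (rule lin_vars)
      moreover have "poly_act sc br (br (a 0) (a 1)) (lin r c) a = 0"
        unfolding pa_lin using prod_Cp xC abC unfolding abelian_set_def by blast
      ultimately have "br (a 0) (a 1) = 0" using L unfolding Phi5'_def by blast
      then show False using nonab by simp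
    qed
    have "v \<in> V.span (Cp \<union> a ` {..<r})" for v
    proof (rule not_indep_ext[OF ind])
      show "\<not> indepF (Suc r) (a(r := v))"
        using L phi_indep[OF P2] unfolding Phi4_def by blast
    qed
    then have sp: "V.span (Cp \<union> a ` {..<r}) = UNIV" by blast
    have tf: "\<forall>f. f \<noteq> 0 \<and> poly_in_vars r f \<longrightarrow> (\<forall>u\<in>Cp. poly_act sc br u f a = 0 \<longrightarrow> u = 0)"
      using C.tf_Phi5'[OF _ _ ind sp] L by blast
    have qb: "quot_basis sc Cp a r" using ind sp C.qb_iff by blast
    show "U_algebra sc br \<and> quot_dim sc (Fit sc br) r"
      unfolding U_algebra_def quot_dim_def FC using lie mt abC qb tf by blast
  next
    assume R: "U_algebra sc br \<and> quot_dim sc (Fit sc br) r"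
    have mt: "metabelian br" using R unfolding U_algebra_def by blast
    interpret mla sc br using lie mt by unfold_locales
    have abF: "abelian_set br (Fit sc br)" using R unfolding U_algebra_def by blast
    have FC: "Fit sc br = Cp" by (rule Fit_eq_U[OF abF])
    have abC: "abelian_set br Cp" using abF FC by simp
    interpret C: mlaCF sc br using lie mt abC by unfold_locales
    obtain n b where qb: "quot_basis sc Cp b n"
      and tf: "\<forall>f. f \<noteq> 0 \<and> poly_in_vars n f \<longrightarrow> (\<forall>u\<in>Cp. poly_act sc br u f b = 0 \<longrightarrow> u = 0)"
      using R unfolding U_algebra_def FC by blast
    have sp: "V.span (Cp \<union> b ` {..<n}) = UNIV" using qb C.qb_iff by blast
    obtain b' where qb': "quot_basis sc Cp b' r"
      using R unfolding quot_dim_def FC by blast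
    have sp': "V.span (Cp \<union> b' ` {..<r}) = UNIV" using qb' C.qb_iff by blast
    have P2: "Phi2 br" by (rule C.U_Phi2[OF sp tf])
    have P3: "Phi3 br" by (rule C.U_Phi3[OF sp tf])
    have P4: "Phi4 sc br r" by (rule C.Phi4_from[OF sp']) simp
    have P1: "Phi1 br" using mt unfolding Phi1_def metabelian_def by blast
    have ind: "indepF r a" by (rule Fr_indep[OF fm assms fitf_Cp])
    have P5: "Phi5' sc br r a"
      unfolding Phi5'_def
    proof (intro allI impI)
      fix f z1 z2
      assume f: "f \<noteq> 0 \<and> poly_in_vars r f" and h: "poly_act sc br (br z1 z2) f a = 0"
      show "br z1 z2 = 0" using C.CL[OF sp tf ind prod_Cp] f h by blast
    qed
    show "Phi1 br \<and> Phi2 br \<and> Phi3 br \<and> Phi4 sc br r \<and> Phi5' sc br r a"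
      using P1 P2 P3 P4 P5 by blast
  qed
qed


end
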